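(* A graph $G$ is a polar-cat if and only if $G$ can be explained by a labeled network that is strong, elementary and quasi-discriminating.
   Context: Graphs finite, simple, undirected; $G-v$, join, cograph (no induced $P_4$). Network on finite $X$: a DAG $N=(V,E)$ with either $V=X=\{x\}$, or (N1) unique root $\rho_N$ of indegree 0, outdegree $\ge2$; (N2) $x\in X$ iff outdegree 0, indegree 1; (N3) every other non-root vertex has indegree 1 and outdegree $\ge2$, or indegree 2 (hybrid-vertex) and outdegree $\ge1$. In networks where each biconnected component has at most one hybrid-vertex (level-1), $\mathrm{lca}_N(x,y)$ is unique. Labeled network: $t:V\to\{0,1,\odot\}$, $t(v)=\odot$ iff $v\in X$; it explains $G$ if $G$ is isomorphic to the graph on $X$ with $x\ne y$ adjacent iff $t(\mathrm{lca}_N(x,y))=1$. $N$ is elementary if it consists of a single cycle $C$ with $|X|+1$ vertices containing $\rho_N$ and a hybrid-vertex $\eta_N$, plus one edge from each vertex of $C$ other than $\rho_N$ to a leaf, these leaves pairwise distinct and forming $X$. $C$ consists of two internally disjoint directed paths (sides) from $\rho_N$ to $\eta_N$; it is weak if one side consists of $\rho_N,\eta_N$ only, or both sides contain exactly one other vertex; $N$ is strong if $C$ is not weak. $(N,t)$ is quasi-discriminating if $t(u)\ne t(v)$ for every edge $(u,v)$ with $u,v\notin X$ and $v$ not a hybrid-vertex. A caterpillar is a rooted tree whose inner vertices each have two children and induce a path with the root at one end; a cherry is a pair of leaves with a common parent. A cograph is caterpillar-explainable if its unique discriminating cotree (labeled tree explaining it with adjacent inner vertices differently labeled) is a caterpillar.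 $G$ is a $(v,G_1,G_2)$-pseudo-cograph if $G_1,G_2$ are induced subgraphs, $v\in V(G)$, with $V(G)=V(G_1)\cup V(G_2)$, $V(G_1)\cap V(G_2)=\{v\}$, $|V(G_1)|,|V(G_2)|>1$, $G_1,G_2$ cographs, and $G-v$ the join or disjoint union of $G_1-v,G_2-v$. Such $G$ with $|V(G)|\ge4$ is a $(v,G_1,G_2)$-polar-cat if either ($G_1,G_2$ both connected and $G-v$ the disjoint union) or ($G_1,G_2$ both disconnected and $G-v$ the join), and $G_1,G_2$ are caterpillar-explainable with $v$ part of a cherry in both explaining caterpillars. A polar-cat is a $(v,G_1,G_2)$-polar-cat for some $v,G_1,G_2$. *)

theory Defs
  imports Main
begin

type_synonym 'a graph = "'a set \<times> 'a set set"

definition is_graph :: "'a graph \<Rightarrow> bool" where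
  "is_graph G \<longleftrightarrow> finite (fst G) \<and> (\<forall>e\<in>snd G. e \<subseteq> fst G \<and> card e = 2)"

definition induced :: "'a graph \<Rightarrow> 'a set \<Rightarrow> 'a graph" where
  "induced G S = (S, {e\<in>snd G. e \<subseteq> S})"

definition del_vert :: "'a graph \<Rightarrow> 'a \<Rightarrow> 'a graph" where
  "del_vert G v = induced G (fst G - {v})"

definition disj_union :: "'a graph \<Rightarrow> 'a graph \<Rightarrow> 'a graph" where
  "disj_union G H = (fst G \<union> fst H, snd G \<union> snd H)"

definition graph_join :: "'a graph \<Rightarrow> 'a graph \<Rightarrow> 'a graph" where
  "graph_join G H = (fst G \<union> fst H,
     snd G \<union> snd H \<union> {{x, y} | x y. x \<in> fst G \<and> y \<in> fst H})"

definition graph_connected :: "'a graph \<Rightarrow> bool" where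
  "graph_connected G \<longleftrightarrow> fst G \<noteq> {} \<and>
     (\<forall>x\<in>fst G. \<forall>y\<in>fst G. (x, y) \<in> {(a, b). {a, b} \<in> snd G}\<^sup>*)"

definition cograph :: "'a graph \<Rightarrow> bool" where
  "cograph G \<longleftrightarrow> \<not> (\<exists>a\<in>fst G. \<exists>b\<in>fst G. \<exists>c\<in>fst G. \<exists>d\<in>fst G.
      distinct [a, b, c, d] \<and>
      {a, b} \<in> snd G \<and> {b, c} \<in> snd G \<and> {c, d} \<in> snd G \<and>
      {a, c} \<notin> snd G \<and> {b, d} \<notin> snd G \<and> {a, d} \<notin> snd G)"

text \<open>A network is given by its vertex set NV, arc set NE (pairs (u,w) meaning u \<rightarrow> w),
  and leaf set X.\<close>

definition indeg :: "('b \<times> 'b) set \<Rightarrow> 'b \<Rightarrow> nat" where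
  "indeg E v = card {u. (u, v) \<in> E}"

definition outdeg :: "('b \<times> 'b) set \<Rightarrow> 'b \<Rightarrow> nat" where
  "outdeg E v = card {w. (v, w) \<in> E}"

definition network :: "'b set \<Rightarrow> ('b \<times> 'b) set \<Rightarrow> 'b set \<Rightarrow> bool" where
  "network V E X \<longleftrightarrow> finite V \<and> E \<subseteq> V \<times> V \<and> X \<subseteq> V \<and> acyclic E \<and>
     ((\<exists>x. V = {x} \<and> X = {x} \<and> E = {}) \<or>
      ((\<exists>!r. r \<in> V \<and> indeg E r = 0) \<and>
       (\<forall>r\<in>V. indeg E r = 0 \<longrightarrow> outdeg E r \<ge> 2) \<and>
       (\<forall>x\<in>V. x \<in> X \<longleftrightarrow> outdeg E x = 0 \<and> indeg E x = 1) \<and>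
       (\<forall>v\<in>V. indeg E v \<noteq> 0 \<and> v \<notin> X \<longrightarrow>
           (indeg E v = 1 \<and> outdeg E v \<ge> 2) \<or> (indeg E v = 2 \<and> outdeg E v \<ge> 1))))"

definition net_root :: "'b set \<Rightarrow> ('b \<times> 'b) set \<Rightarrow> 'b" where
  "net_root V E = (THE r. r \<in> V \<and> indeg E r = 0)"

definition hybrid :: "('b \<times> 'b) set \<Rightarrow> 'b \<Rightarrow> bool" where
  "hybrid E v \<longleftrightarrow> indeg E v = 2"

text \<open>Lowest common ancestor (unique in level-1 networks, in particular in trees and
  elementary networks).\<close>
definition is_lca :: "'b set \<Rightarrow> ('b \<times> 'b) set \<Rightarrow> 'b \<Rightarrow> 'b \<Rightarrow> 'b \<Rightarrow> bool" where
  "is_lca V E x y v \<longleftrightarrow> v \<in> V \<and> (v, x) \<in> E\<^sup>* \<and> (v, y) \<in> E\<^sup>* \<and>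
     (\<forall>w\<in>V. (w, x) \<in> E\<^sup>* \<and> (w, y) \<in> E\<^sup>* \<and> (v, w) \<in> E\<^sup>* \<longrightarrow> w = v)"

definition lca :: "'b set \<Rightarrow> ('b \<times> 'b) set \<Rightarrow> 'b \<Rightarrow> 'b \<Rightarrow> 'b" where
  "lca V E x y = (THE v. is_lca V E x y v)"

datatype label = L0 | L1 | Odot

definition labeled_network :: "'b set \<Rightarrow> ('b \<times> 'b) set \<Rightarrow> 'b set \<Rightarrow> ('b \<Rightarrow> label) \<Rightarrow> bool" where
  "labeled_network V E X t \<longleftrightarrow> network V E X \<and> (\<forall>v\<in>V. t v = Odot \<longleftrightarrow> v \<in> X)"

definition explains_via :: "'a graph \<Rightarrow> 'b set \<Rightarrow> ('b \<times> 'b) set \<Rightarrow> 'b set \<Rightarrow> ('b \<Rightarrow> label)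
    \<Rightarrow> ('a \<Rightarrow> 'b) \<Rightarrow> bool" where
  "explains_via G V E X t \<phi> \<longleftrightarrow> bij_betw \<phi> (fst G) X \<and>
     (\<forall>x\<in>fst G. \<forall>y\<in>fst G. x \<noteq> y \<longrightarrow> ({x, y} \<in> snd G \<longleftrightarrow> t (lca V E (\<phi> x) (\<phi> y)) = L1))"

definition explains :: "'a graph \<Rightarrow> 'b set \<Rightarrow> ('b \<times> 'b) set \<Rightarrow> 'b set \<Rightarrow> ('b \<Rightarrow> label) \<Rightarrow> bool" where
  "explains G V E X t \<longleftrightarrow> (\<exists>\<phi>. explains_via G V E X t \<phi>)"

text \<open>Elementary networks, described by the two sides P, Q of the cycle C
  (lists of vertices from the root to the hybrid vertex eta).\<close>
definition elementary_sides :: "'b set \<Rightarrow> ('b \<times> 'b) set \<Rightarrow> 'b set \<Rightarrow> 'b list \<Rightarrow> 'b list \<Rightarrow> bool" where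
  "elementary_sides V E X P Q \<longleftrightarrow>
     length P \<ge> 2 \<and> length Q \<ge> 2 \<and> \<not> (length P = 2 \<and> length Q = 2) \<and>
     distinct P \<and> distinct Q \<and>
     hd P = net_root V E \<and> hd Q = hd P \<and> last Q = last P \<and> hybrid E (last P) \<and>
     set P \<inter> set Q = {hd P, last P} \<and>
     (let C = set P \<union> set Q in
        C \<inter> X = {} \<and> V = C \<union> X \<and> card C = card X + 1 \<and>
        (\<exists>lf. bij_betw lf (C - {hd P}) X \<and>
           E = set (zip P (tl P)) \<union> set (zip Q (tl Q)) \<union> {(c, lf c) | c. c \<in> C - {hd P}}))"

definition elementary :: "'b set \<Rightarrow> ('b \<times> 'b) set \<Rightarrow> 'b set \<Rightarrow> bool" where
  "elementary V E X \<longleftrightarrow> (\<exists>P Q. elementary_sides V E X P Q)"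

definition weak_sides :: "'b list \<Rightarrow> 'b list \<Rightarrow> bool" where
  "weak_sides P Q \<longleftrightarrow> length P = 2 \<or> length Q = 2 \<or> (length P = 3 \<and> length Q = 3)"

definition strong :: "'b set \<Rightarrow> ('b \<times> 'b) set \<Rightarrow> 'b set \<Rightarrow> bool" where
  "strong V E X \<longleftrightarrow> elementary V E X \<and>
     (\<forall>P Q. elementary_sides V E X P Q \<longrightarrow> \<not> weak_sides P Q)"

definition quasi_discriminating :: "'b set \<Rightarrow> ('b \<times> 'b) set \<Rightarrow> 'b set \<Rightarrow> ('b \<Rightarrow> label) \<Rightarrow> bool" where
  "quasi_discriminating V E X t \<longleftrightarrow>
     (\<forall>(u, w)\<in>E. u \<notin> X \<and> w \<notin> X \<and> \<not> hybrid E w \<longrightarrow> t u \<noteq> t w)"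

definition is_tree :: "'b set \<Rightarrow> ('b \<times> 'b) set \<Rightarrow> 'b set \<Rightarrow> bool" where
  "is_tree V E X \<longleftrightarrow> network V E X \<and> (\<forall>v\<in>V. indeg E v \<le> 1)"

definition discriminating :: "('b \<times> 'b) set \<Rightarrow> 'b set \<Rightarrow> ('b \<Rightarrow> label) \<Rightarrow> bool" where
  "discriminating E X t \<longleftrightarrow> (\<forall>(u, w)\<in>E. u \<notin> X \<and> w \<notin> X \<longrightarrow> t u \<noteq> t w)"

definition disc_cotree_via :: "'a graph \<Rightarrow> 'b set \<Rightarrow> ('b \<times> 'b) set \<Rightarrow> 'b set \<Rightarrow> ('b \<Rightarrow> label)
    \<Rightarrow> ('a \<Rightarrow> 'b) \<Rightarrow> bool" where
  "disc_cotree_via G V E X t \<phi> \<longleftrightarrow> labeled_network V E X t \<and> is_tree V E X \<and>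
     discriminating E X t \<and> explains_via G V E X t \<phi>"

definition caterpillar :: "'b set \<Rightarrow> ('b \<times> 'b) set \<Rightarrow> 'b set \<Rightarrow> bool" where
  "caterpillar V E X \<longleftrightarrow> is_tree V E X \<and> (\<forall>v\<in>V - X. outdeg E v = 2) \<and>
     (\<exists>L. L \<noteq> [] \<and> distinct L \<and> set L = V - X \<and> hd L = net_root V E \<and>
        {(u, w) \<in> E. u \<in> V - X \<and> w \<in> V - X} = set (zip L (tl L)))"

definition cherry :: "('b \<times> 'b) set \<Rightarrow> 'b set \<Rightarrow> 'b \<Rightarrow> 'b \<Rightarrow> bool" where
  "cherry E X x y \<longleftrightarrow> x \<in> X \<and> y \<in> X \<and> x \<noteq> y \<and> (\<exists>p. (p, x) \<in> E \<and> (p, y) \<in> E)"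

definition caterpillar_explainable :: "'a graph \<Rightarrow> bool" where
  "caterpillar_explainable G \<longleftrightarrow> cograph G \<and>
     (\<exists>(V::nat set) E X t \<phi>. disc_cotree_via G V E X t \<phi> \<and> caterpillar V E X)"

definition cherry_in_caterpillar :: "'a graph \<Rightarrow> 'a \<Rightarrow> bool" where
  "cherry_in_caterpillar G v \<longleftrightarrow>
     (\<exists>(V::nat set) E X t \<phi>. disc_cotree_via G V E X t \<phi> \<and> caterpillar V E X \<and>
        (\<exists>y. cherry E X (\<phi> v) y))"

definition pseudo_cograph :: "'a graph \<Rightarrow> 'a \<Rightarrow> 'a set \<Rightarrow> 'a set \<Rightarrow> bool" where
  "pseudo_cograph G v V1 V2 \<longleftrightarrow>
     V1 \<subseteq> fst G \<and> V2 \<subseteq> fst G \<and> v \<in> fst G \<and>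
     fst G = V1 \<union> V2 \<and> V1 \<inter> V2 = {v} \<and> card V1 > 1 \<and> card V2 > 1 \<and>
     cograph (induced G V1) \<and> cograph (induced G V2) \<and>
     (del_vert G v = graph_join (del_vert (induced G V1) v) (del_vert (induced G V2) v) \<or>
      del_vert G v = disj_union (del_vert (induced G V1) v) (del_vert (induced G V2) v))"

definition polar_cat_at :: "'a graph \<Rightarrow> 'a \<Rightarrow> 'a set \<Rightarrow> 'a set \<Rightarrow> bool" where
  "polar_cat_at G v V1 V2 \<longleftrightarrow> pseudo_cograph G v V1 V2 \<and> card (fst G) \<ge> 4 \<and>
     ((graph_connected (induced G V1) \<and> graph_connected (induced G V2) \<and>
         del_vert G v = disj_union (del_vert (induced G V1) v) (del_vert (induced G V2) v)) \<or>
      (\<not> graph_connected (induced G V1) \<and> \<not> graph_connected (induced G V2) \<and>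
         del_vert G v = graph_join (del_vert (induced G V1) v) (del_vert (induced G V2) v))) \<and>
     caterpillar_explainable (induced G V1) \<and> caterpillar_explainable (induced G V2) \<and>
     cherry_in_caterpillar (induced G V1) v \<and> cherry_in_caterpillar (induced G V2) v"

definition polar_cat :: "'a graph \<Rightarrow> bool" where
  "polar_cat G \<longleftrightarrow> (\<exists>v V1 V2. polar_cat_at G v V1 V2)"

end

theory Submission
  imports Defs
begin

lemma in_set_zip_tl: "(a,b) \<in> set (zip xs (tl xs)) \<longleftrightarrow> (\<exists>i. Suc i < length xs \<and> a = xs!i \<and> b = xs!Suc i)"
  apply (auto simp: set_zip nth_tl)
  apply (rule_tac x=i in exI)
  apply auto
  done

lemma rtrancl_antisym_acyclic: assumes "acyclic E" "(a,b)\<in>E\<^sup>*" "(b,a)\<in>E\<^sup>*" shows "a = b"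
proof (rule ccontr)
  assume "a\<noteq>b"
  then have "(a,b)\<in>E\<^sup>+" "(b,a)\<in>E\<^sup>+" using assms by (auto simp: rtrancl_eq_or_trancl)
  then have "(a,a)\<in>E\<^sup>+" by auto
  with assms(1) show False by (auto simp: acyclic_def)
qed

lemma lca_eqI:
  assumes ac: "acyclic E" and "w0 \<in> V" "(w0,x)\<in>E\<^sup>*" "(w0,y)\<in>E\<^sup>*"
    and dom: "\<And>w. (w,x)\<in>E\<^sup>* \<Longrightarrow> (w,y)\<in>E\<^sup>* \<Longrightarrow> (w,w0)\<in>E\<^sup>*"
  shows "lca V E x y = w0"
proof -
  have L: "is_lca V E x y w0" unfolding is_lca_def using assms rtrancl_antisym_acyclic[OF ac] by blast
  have "w = w0" if "is_lca V E x y w" for w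
    using that assms unfolding is_lca_def by blast
  then show ?thesis unfolding lca_def using L by (rule the_equality[rotated])
qed

lemma lca_sym: "lca V E x y = lca V E y x"
  unfolding lca_def is_lca_def by (simp only: conj_ac)

lemma acyclic_rank: assumes "E \<subseteq> {(a,b). f a < (f b::nat)}" shows "acyclic E"
proof -
  have "f a < f b" if "(a,b)\<in>E\<^sup>+" for a b
    using that by (induction rule: trancl_induct) (use assms in auto)
  then show ?thesis by (auto simp: acyclic_def)
qed

locale elem =
  fixes P Q :: "'b list" and X :: "'b set" and lf :: "'b \<Rightarrow> 'b" and V :: "'b set" and E :: "('b\<times>'b) set"
  assumes lenP: "length P \<ge> 2" and lenQ: "length Q \<ge> 2"
    and notboth: "\<not> (length P = 2 \<and> length Q = 2)"
    and dP: "distinct P" and dQ: "distinct Q"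
    and hdQ: "hd Q = hd P" and lastQ: "last Q = last P"
    and inter: "set P \<inter> set Q = {hd P, last P}"
    and CX: "(set P \<union> set Q) \<inter> X = {}"
    and Vdef: "V = set P \<union> set Q \<union> X"
    and bij: "bij_betw lf (set P \<union> set Q - {hd P}) X"
    and Edef: "E = set (zip P (tl P)) \<union> set (zip Q (tl Q)) \<union> {(c, lf c) | c. c \<in> set P \<union> set Q - {hd P}}"
begin

abbreviation "r \<equiv> hd P"
abbreviation "h \<equiv> last P"
abbreviation "C \<equiv> set P \<union> set Q"

lemma Pne: "P \<noteq> []" using lenP by auto
lemma Qne: "Q \<noteq> []" using lenQ by auto
lemma P0: "P!0 = r" using Pne by (simp add: hd_conv_nth)
lemma Q0: "Q!0 = r" using Qne hdQ by (simp add: hd_conv_nth)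
lemma Plast: "P!(length P - 1) = h" using Pne by (simp add: last_conv_nth)
lemma Qlast: "Q!(length Q - 1) = h" using Qne lastQ by (simp add: last_conv_nth)

lemma nthP_eq: "i < length P \<Longrightarrow> j < length P \<Longrightarrow> P!i = P!j \<longleftrightarrow> i = j"
  using dP nth_eq_iff_index_eq by blast
lemma nthQ_eq: "i < length Q \<Longrightarrow> j < length Q \<Longrightarrow> Q!i = Q!j \<longleftrightarrow> i = j"
  using dQ nth_eq_iff_index_eq by blast

lemma rh: "r \<noteq> h"
proof
  assume "r = h"
  then have "P!0 = P!(length P - 1)" using P0 Plast by simp
  moreover have "(0::nat) < length P" "length P - 1 < length P" using lenP by auto
  ultimately have "0 = length P - 1" using nthP_eq by blast
  then show False using lenP by auto
qed

lemma P_in_Q: "i < length P \<Longrightarrow> P!i \<in> set Q \<Longrightarrow> i = 0 \<or> i = length P - 1"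
proof -
  assume a: "i < length P" "P!i \<in> set Q"
  then have "P!i \<in> set P \<inter> set Q" by auto
  then have "P!i \<in> {r, h}" using inter by blast
  moreover have "P!i = P!0 \<Longrightarrow> i = 0" using nthP_eq[of i 0] Pne a Pne by auto
  moreover have "P!i = P!(length P - 1) \<Longrightarrow> i = length P - 1" using nthP_eq[of i "length P - 1"] Pne a by auto
  ultimately show ?thesis using P0 Plast by auto
qed

lemma Q_in_P: "i < length Q \<Longrightarrow> Q!i \<in> set P \<Longrightarrow> i = 0 \<or> i = length Q - 1"
proof -
  assume a: "i < length Q" "Q!i \<in> set P"
  then have "Q!i \<in> set P \<inter> set Q" by auto
  then have "Q!i \<in> {r, h}" using inter by blast
  moreover have "Q!i = Q!0 \<Longrightarrow> i = 0" using nthQ_eq[of i 0] Qne a Qne by auto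
  moreover have "Q!i = Q!(length Q - 1) \<Longrightarrow> i = length Q - 1" using nthQ_eq[of i "length Q - 1"] Qne a by auto
  ultimately show ?thesis using Q0 Qlast by auto
qed

lemma E_iff: "(a,b) \<in> E \<longleftrightarrow> (\<exists>i. Suc i < length P \<and> a = P!i \<and> b = P!Suc i) \<or>
   (\<exists>i. Suc i < length Q \<and> a = Q!i \<and> b = Q!Suc i) \<or> (a \<in> C - {r} \<and> b = lf a)"
  by (auto simp: Edef in_set_zip_tl)

lemma edgeP: assumes "Suc j < length P" shows "(P!j, P!Suc j) \<in> E"
proof -
  have "(P!j, P!Suc j) \<in> set (zip P (tl P))" unfolding in_set_zip_tl using assms by blast
  then show ?thesis unfolding Edef by (rule UnI1[OF UnI1])
qed
lemma edgeQ: assumes "Suc j < length Q" shows "(Q!j, Q!Suc j) \<in> E"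
proof -
  have "(Q!j, Q!Suc j) \<in> set (zip Q (tl Q))" unfolding in_set_zip_tl using assms by blast
  then show ?thesis unfolding Edef by (rule UnI1[OF UnI2])
qed
lemma edge_lf: "c \<in> C - {r} \<Longrightarrow> (c, lf c) \<in> E" unfolding Edef by (rule UnI2) simp

lemma lf_X: "c \<in> C - {r} \<Longrightarrow> lf c \<in> X" using bij by (auto simp: bij_betw_def)
lemma lf_inj: "c \<in> C - {r} \<Longrightarrow> d \<in> C - {r} \<Longrightarrow> lf c = lf d \<longleftrightarrow> c = d"
  using bij by (auto simp: bij_betw_def inj_on_def)
lemma X_lf: "x \<in> X \<Longrightarrow> \<exists>c \<in> C-{r}. x = lf c" using bij by (auto simp: bij_betw_def)
lemma notX: "c \<in> C \<Longrightarrow> c \<notin> X" using CX by auto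
lemma nthP_C: "i < length P \<Longrightarrow> P!i \<in> C" by auto
lemma nthQ_C: "i < length Q \<Longrightarrow> Q!i \<in> C" by auto

lemma swap: "elem Q P X lf V E"
proof -
  have u: "set Q \<union> set P = C" by (rule Un_commute)
  have i: "set Q \<inter> set P = {hd Q, last Q}" using inter hdQ lastQ by (simp add: Int_commute)
  have e: "E = set (zip Q (tl Q)) \<union> set (zip P (tl P)) \<union> {(c, lf c) | c. c \<in> set Q \<union> set P - {hd Q}}"
    unfolding Edef u hdQ by blast
  show ?thesis unfolding elem_def u i hdQ lastQ
    using lenP lenQ notboth dP dQ CX Vdef bij e unfolding u hdQ by auto
qed


lemma P_ne_r: "0 < i \<Longrightarrow> i < length P \<Longrightarrow> P!i \<noteq> r"
  using nthP_eq[of i 0] Pne P0 by auto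
lemma P_ne_h: "i < length P - 1 \<Longrightarrow> P!i \<noteq> h"
  using nthP_eq[of i "length P - 1"] Pne Plast by auto
lemma Pint_notQ: assumes "0 < i" "i < length P - 1" shows "P!i \<notin> set Q"
proof
  assume a: "P!i \<in> set Q"
  have "i < length P" using assms by linarith
  from P_in_Q[OF this a] assms show False by linarith
qed
lemma Q_ne_r: "0 < i \<Longrightarrow> i < length Q \<Longrightarrow> Q!i \<noteq> r"
  using nthQ_eq[of i 0] Qne Q0 by auto
lemma Q_ne_h: "i < length Q - 1 \<Longrightarrow> Q!i \<noteq> h"
  using nthQ_eq[of i "length Q - 1"] Qne Qlast by auto
lemma Qint_notP: assumes "0 < i" "i < length Q - 1" shows "Q!i \<notin> set P"
proof
  assume a: "Q!i \<in> set P"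
  have "i < length Q" using assms by linarith
  from Q_in_P[OF this a] assms show False by linarith
qed
lemma r_C: "r \<in> C" using Pne by auto
lemma h_C: "h \<in> C" using Pne by auto

lemma in_r: "{u. (u, r) \<in> E} = {}"
proof -
  have False if "(u, r) \<in> E" for u
  proof -
    from that[unfolded E_iff] show False
    proof (elim disjE exE conjE)
      fix i assume "Suc i < length P" "r = P!Suc i" then show False using P_ne_r[of "Suc i"] by auto
    next
      fix i assume "Suc i < length Q" "r = Q!Suc i" then show False using Q_ne_r[of "Suc i"] by auto
    next
      assume "u \<in> C - {r}" "r = lf u" then show False using lf_X notX r_C by metis
    qed
  qed
  then show ?thesis by auto
qed

lemma in_Pint: assumes "0 < i" "i < length P - 1" shows "{u. (u, P!i) \<in> E} = {P!(i-1)}"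
proof -
  have iP: "i < length P" using assms by linarith
  have "u = P!(i-1)" if "(u, P!i) \<in> E" for u
  proof -
    from that[unfolded E_iff] show ?thesis
    proof (elim disjE exE conjE)
      fix j assume "Suc j < length P" "u = P!j" "P!i = P!Suc j" then show ?thesis using nthP_eq[of i "Suc j"] Pne assms by auto
    next
      fix j assume "Suc j < length Q" "P!i = Q!Suc j" then show ?thesis using Pint_notQ[OF assms] by (metis nth_mem)
    next
      assume "u \<in> C - {r}" "P!i = lf u" then show ?thesis using lf_X[of u] notX[of "P!i"] nth_mem[OF iP] by auto
    qed
  qed
  moreover have "(P!(i-1), P!i) \<in> E"
  proof -
    have "Suc (i-1) = i" using assms by simp
    then show ?thesis using edgeP[of "i-1"] iP by simp
  qed
  ultimately show ?thesis by blast
qed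

lemma in_h: "{u. (u, h) \<in> E} = {P!(length P - 2), Q!(length Q - 2)}"
proof -
  have "u = P!(length P - 2) \<or> u = Q!(length Q - 2)" if "(u, h) \<in> E" for u
  proof -
    from that[unfolded E_iff] show ?thesis
    proof (elim disjE exE conjE)
      fix j assume a: "Suc j < length P" "u = P!j" "h = P!Suc j"
      then have "Suc j = length P - 1" using nthP_eq[of "length P - 1" "Suc j"] Pne Plast by auto
      then have "j = length P - 2" by arith
      then show ?thesis using a by simp
    next
      fix j assume a: "Suc j < length Q" "u = Q!j" "h = Q!Suc j"
      then have "Suc j = length Q - 1" using nthQ_eq[of "length Q - 1" "Suc j"] Qne Qlast by auto
      then have "j = length Q - 2" by arith
      then show ?thesis using a by simp
    next
      assume "u \<in> C - {r}" "h = lf u" then show ?thesis using lf_X notX h_C by metis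
    qed
  qed
  moreover have "(P!(length P - 2), h) \<in> E"
  proof -
    have "Suc (length P - 2) = length P - 1" "length P - 1 < length P" using lenP by auto
    then show ?thesis using edgeP[of "length P - 2"] Plast by simp
  qed
  moreover have "(Q!(length Q - 2), h) \<in> E"
  proof -
    have "Suc (length Q - 2) = length Q - 1" "length Q - 1 < length Q" using lenQ by auto
    then show ?thesis using edgeQ[of "length Q - 2"] Qlast by simp
  qed
  ultimately show ?thesis by blast
qed

lemma in_leaf: assumes "c \<in> C - {r}" shows "{u. (u, lf c) \<in> E} = {c}"
proof -
  have "u = c" if "(u, lf c) \<in> E" for u
  proof -
    from that[unfolded E_iff] show ?thesis
    proof (elim disjE exE conjE)
      fix j assume "Suc j < length P" "lf c = P!Suc j" then show ?thesis using lf_X[OF assms] notX[of "P!Suc j"] by auto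
    next
      fix j assume "Suc j < length Q" "lf c = Q!Suc j" then show ?thesis using lf_X[OF assms] notX[of "Q!Suc j"] by auto
    next
      assume "u \<in> C - {r}" "lf c = lf u" then show ?thesis using lf_inj assms by metis
    qed
  qed
  moreover have "(c, lf c) \<in> E" unfolding E_iff using assms by auto
  ultimately show ?thesis by blast
qed

lemma out_r: "{w. (r, w) \<in> E} = {P!1, Q!1}"
proof -
  have "w = P!1 \<or> w = Q!1" if "(r, w) \<in> E" for w
  proof -
    from that[unfolded E_iff] show ?thesis
    proof (elim disjE exE conjE)
      fix j assume "Suc j < length P" "r = P!j" "w = P!Suc j" then show ?thesis using nthP_eq[of 0 j] Pne P0 by auto
    next
      fix j assume "Suc j < length Q" "r = Q!j" "w = Q!Suc j" then show ?thesis using nthQ_eq[of 0 j] Qne Q0 by auto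
    qed auto
  qed
  moreover have "(r, P!1) \<in> E"
  proof -
    have "Suc 0 < length P" using lenP by auto
    then show ?thesis using edgeP[of 0] P0 by simp
  qed
  moreover have "(r, Q!1) \<in> E"
  proof -
    have "Suc 0 < length Q" using lenQ by auto
    then show ?thesis using edgeQ[of 0] Q0 by simp
  qed
  ultimately show ?thesis by blast
qed

lemma out_Pint: assumes "0 < i" "i < length P - 1" shows "{w. (P!i, w) \<in> E} = {P!Suc i, lf (P!i)}"
proof -
  have iP: "i < length P" using assms by linarith
  have "w = P!Suc i \<or> w = lf (P!i)" if "(P!i, w) \<in> E" for w
  proof -
    from that[unfolded E_iff] show ?thesis
    proof (elim disjE exE conjE)
      fix j assume "Suc j < length P" "P!i = P!j" "w = P!Suc j" then show ?thesis using nthP_eq[of i j] Pne assms by auto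
    next
      fix j assume "Suc j < length Q" "P!i = Q!j" then show ?thesis using Pint_notQ[OF assms] by (metis Suc_lessD nth_mem)
    qed auto
  qed
  moreover have "(P!i, P!Suc i) \<in> E"
  proof -
    have "Suc i < length P" using assms by linarith
    then show ?thesis using edgeP by simp
  qed
  moreover have "(P!i, lf (P!i)) \<in> E" unfolding E_iff using assms P_ne_r[of i] nth_mem[OF iP] by auto
  ultimately show ?thesis by blast
qed

lemma out_h: "{w. (h, w) \<in> E} = {lf h}"
proof -
  have "w = lf h" if "(h, w) \<in> E" for w
  proof -
    from that[unfolded E_iff] show ?thesis
    proof (elim disjE exE conjE)
      fix j assume "Suc j < length P" "h = P!j" then show ?thesis using nthP_eq[of "length P - 1" j] Pne Plast by auto
    next
      fix j assume "Suc j < length Q" "h = Q!j" then show ?thesis using nthQ_eq[of "length Q - 1" j] Qne Qlast by auto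
    qed auto
  qed
  moreover have "(h, lf h) \<in> E" unfolding E_iff using rh h_C by auto
  ultimately show ?thesis by blast
qed

lemma out_X: assumes "x \<in> X" shows "{w. (x, w) \<in> E} = {}"
proof -
  have False if "(x, w) \<in> E" for w
    using that[unfolded E_iff] assms notX by (auto dest: nth_mem)
  then show ?thesis by auto
qed


lemma in_Qint: "0 < i \<Longrightarrow> i < length Q - 1 \<Longrightarrow> {u. (u, Q!i) \<in> E} = {Q!(i-1)}"
  using elem.in_Pint[OF swap] .
lemma out_Qint: "0 < i \<Longrightarrow> i < length Q - 1 \<Longrightarrow> {w. (Q!i, w) \<in> E} = {Q!Suc i, lf (Q!i)}"
  using elem.out_Pint[OF swap] .

lemma V_cases: assumes "a \<in> V"
  shows "a = r \<or> a = h \<or> (\<exists>i. 0<i \<and> i<length P - 1 \<and> a = P!i) \<or> (\<exists>i. 0<i \<and> i<length Q - 1 \<and> a = Q!i) \<or> a \<in> X"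
proof -
  have "a \<in> set P \<or> a \<in> set Q \<or> a \<in> X" using assms Vdef by auto
  then show ?thesis
  proof (elim disjE)
    assume "a \<in> set P"
    then obtain i where i: "i < length P" "a = P!i" by (auto simp: in_set_conv_nth)
    consider "i = 0" | "i = length P - 1" | "0 < i \<and> i < length P - 1" using i(1) by linarith
    then show ?thesis using P0 Plast i(2) by cases blast+
  next
    assume "a \<in> set Q"
    then obtain i where i: "i < length Q" "a = Q!i" by (auto simp: in_set_conv_nth)
    consider "i = 0" | "i = length Q - 1" | "0 < i \<and> i < length Q - 1" using i(1) by linarith
    then show ?thesis using Q0 Qlast i(2) by cases blast+
  qed simp
qed

lemma P1Q1: "P!1 \<noteq> Q!1"
proof
  assume e: "P!1 = Q!1"
  have "1 < length P" "1 < length Q" using lenP lenQ by auto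
  then have "P!1 \<in> set Q" using e by simp
  then have "1 = length P - 1" using P_in_Q[of 1] \<open>1 < length P\<close> by auto
  then have "Q!1 = h" using e Plast by simp
  then have "Q!1 = Q!(length Q - 1)" using Qlast by simp
  then have "1 = length Q - 1" using nthQ_eq[of 1 "length Q - 1"] Qne \<open>1 < length Q\<close> by auto
  then show False using notboth \<open>1 = length P - 1\<close> by auto
qed

lemma hpar: "P!(length P - 2) \<noteq> Q!(length Q - 2)"
proof
  assume e: "P!(length P - 2) = Q!(length Q - 2)"
  have l: "length P - 2 < length P" "length Q - 2 < length Q" using lenP lenQ by auto
  then have "P!(length P - 2) \<in> set Q" using e by simp
  then have "length P - 2 = 0" using P_in_Q[OF l(1)] lenP by auto
  then have "Q!(length Q - 2) = Q!0" using e P0 Q0 by simp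
  then have "length Q - 2 = 0" using nthQ_eq[OF l(2)] Qne by auto
  then show False using notboth \<open>length P - 2 = 0\<close> lenP lenQ by auto
qed

lemma Pint_lf: "0 < i \<Longrightarrow> i < length P - 1 \<Longrightarrow> P!Suc i \<noteq> lf (P!i)"
  using notX[of "P!Suc i"] lf_X[of "P!i"] P_ne_r[of i] by auto

lemma deg_r: "indeg E r = 0" "outdeg E r = 2"
  unfolding indeg_def outdeg_def in_r out_r using P1Q1 by auto
lemma deg_h: "indeg E h = 2" "outdeg E h = 1"
  unfolding indeg_def outdeg_def in_h out_h using hpar by auto
lemma deg_Pint: "0 < i \<Longrightarrow> i < length P - 1 \<Longrightarrow> indeg E (P!i) = 1 \<and> outdeg E (P!i) = 2"
  unfolding indeg_def outdeg_def using in_Pint out_Pint Pint_lf by auto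
lemma deg_Qint: "0 < i \<Longrightarrow> i < length Q - 1 \<Longrightarrow> indeg E (Q!i) = 1 \<and> outdeg E (Q!i) = 2"
  using elem.deg_Pint[OF swap] .
lemma deg_X: "x \<in> X \<Longrightarrow> indeg E x = 1 \<and> outdeg E x = 0"
  unfolding indeg_def outdeg_def using in_leaf out_X X_lf by fastforce

definition idxP where "idxP a = (LEAST j. j < length P \<and> P!j = a)"
definition idxQ where "idxQ a = (LEAST j. j < length Q \<and> Q!j = a)"
lemma idxP_nth: "i < length P \<Longrightarrow> idxP (P!i) = i"
  unfolding idxP_def by (rule Least_equality) (use nthP_eq in \<open>auto simp: not_less[symmetric]\<close>)
lemma idxQ_nth: "i < length Q \<Longrightarrow> idxQ (Q!i) = i"
  unfolding idxQ_def by (rule Least_equality) (use nthQ_eq in \<open>auto simp: not_less[symmetric]\<close>)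

definition rk where "rk a = (if a \<in> X then 3*(length P + length Q) else if a = h then 2*(length P + length Q)
   else if a \<in> set P then idxP a else idxQ a)"

lemma rk_C: assumes "c \<in> C" shows "rk c \<le> 2*(length P + length Q)"
proof -
  have "idxP c < length P" if "c \<in> set P" using that by (auto simp: in_set_conv_nth idxP_nth)
  moreover have "idxQ c < length Q" if "c \<in> set Q" using that by (auto simp: in_set_conv_nth idxQ_nth)
  ultimately show ?thesis using assms notX[OF assms] unfolding rk_def by auto
qed

lemma acyc: "acyclic E"
proof (rule acyclic_rank[where f=rk], safe)
  fix a b assume "(a,b) \<in> E"
  then show "rk a < rk b" unfolding E_iff
  proof (elim disjE exE conjE)
    fix i assume i: "Suc i < length P" "a = P!i" "b = P!Suc i"
    have ra: "rk a = i" unfolding rk_def i(2) using notX[of "P!i"] P_ne_h[of i] i idxP_nth[of i] by auto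
    show ?thesis
    proof (cases "b = h")
      case True then show ?thesis using ra i unfolding rk_def using notX h_C by auto
    next
      case False then show ?thesis using ra i unfolding rk_def using notX[of "P!Suc i"] idxP_nth[of "Suc i"] by auto
    qed
  next
    fix i assume i: "Suc i < length Q" "a = Q!i" "b = Q!Suc i"
    have ra: "rk a \<le> i"
    proof (cases "Q!i \<in> set P")
      case True
      then have "i = 0" using Q_in_P[of i] i by auto
      then have "Q!i = P!0" using Q0 P0 by simp
      then show ?thesis unfolding rk_def i(2) using notX[of "Q!i"] Q_ne_h[of i] i idxP_nth[of 0] Pne by auto
    next
      case False
      then show ?thesis unfolding rk_def i(2) using notX[of "Q!i"] Q_ne_h[of i] i idxQ_nth[of i] by auto
    qed
    show ?thesis
    proof (cases "b = h")
      case True then show ?thesis using ra i unfolding rk_def using notX h_C by auto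
    next
      case False
      have "Q!Suc i \<notin> set P"
      proof
        assume "Q!Suc i \<in> set P"
        then have "Suc i = length Q - 1" using Q_in_P[of "Suc i"] i by auto
        then show False using False i Qlast by simp
      qed
      then show ?thesis using ra i False unfolding rk_def using notX[of "Q!Suc i"] idxQ_nth[of "Suc i"] by auto
    qed
  next
    assume "a \<in> C - {r}" "b = lf a"
    then show ?thesis using rk_C[of a] lf_X[of a] lenP unfolding rk_def[of b] by auto
  qed
qed

lemma finV: "finite V"
proof -
  have "finite (C - {r})" by simp
  then have "finite X" using bij bij_betw_finite by blast
  then show ?thesis using Vdef by simp
qed

lemma EV: "E \<subseteq> V \<times> V"
  using lf_X unfolding Vdef by (auto simp: E_iff)

lemma indeg_pos: "a \<in> V \<Longrightarrow> a \<noteq> r \<Longrightarrow> indeg E a \<noteq> 0"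
  using V_cases[of a] deg_h deg_Pint deg_Qint deg_X by auto

lemma hyb_iff: "a \<in> V \<Longrightarrow> hybrid E a \<longleftrightarrow> a = h"
  unfolding hybrid_def using V_cases[of a] deg_h deg_Pint deg_Qint deg_X deg_r by auto

lemma net: "network V E X"
  unfolding network_def
proof (intro conjI disjI2)
  show "finite V" by (rule finV)
  show "E \<subseteq> V \<times> V" by (rule EV)
  show "X \<subseteq> V" using Vdef by auto
  show "acyclic E" by (rule acyc)
  have rV: "r \<in> V" using Vdef r_C by auto
  show "\<exists>!x. x \<in> V \<and> indeg E x = 0"
    using rV deg_r indeg_pos by blast
  show "\<forall>x\<in>V. indeg E x = 0 \<longrightarrow> 2 \<le> outdeg E x"
    using deg_r indeg_pos by (metis order_refl)
  show "\<forall>x\<in>V. (x \<in> X) = (outdeg E x = 0 \<and> indeg E x = 1)"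
    using V_cases deg_X deg_r deg_h deg_Pint deg_Qint by fastforce
  show "\<forall>v\<in>V. indeg E v \<noteq> 0 \<and> v \<notin> X \<longrightarrow> indeg E v = 1 \<and> 2 \<le> outdeg E v \<or> indeg E v = 2 \<and> 1 \<le> outdeg E v"
    using V_cases deg_r deg_h deg_Pint deg_Qint by fastforce
qed

lemma root: "net_root V E = r"
proof -
  have rV: "r \<in> V" using Vdef r_C by auto
  show ?thesis unfolding net_root_def
    by (rule the_equality) (use rV deg_r indeg_pos in blast)+
qed


definition cA where "cA w a \<longleftrightarrow> (\<exists>i j. i \<le> j \<and> j < length P \<and> w = P!i \<and> a = P!j) \<or>
   (\<exists>i j. i \<le> j \<and> j < length Q \<and> w = Q!i \<and> a = Q!j)"

lemma cA_swap: "elem.cA Q P = cA"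
  by (auto simp: fun_eq_iff elem.cA_def[OF swap] cA_def)

lemma chainP: "i \<le> j \<Longrightarrow> j < length P \<Longrightarrow> (P!i, P!j) \<in> E\<^sup>*"
proof (induction j)
  case 0 then show ?case by simp
next
  case (Suc j)
  show ?case
  proof (cases "i = Suc j")
    case True then show ?thesis by simp
  next
    case False
    then have "(P!i, P!j) \<in> E\<^sup>*" using Suc by auto
    moreover have "(P!j, P!Suc j) \<in> E" using edgeP Suc by auto
    ultimately show ?thesis by simp
  qed
qed

lemma chainQ: "i \<le> j \<Longrightarrow> j < length Q \<Longrightarrow> (Q!i, Q!j) \<in> E\<^sup>*"
  using elem.chainP[OF swap] .

lemma cA_rt: "cA w a \<Longrightarrow> (w,a) \<in> E\<^sup>*"
  unfolding cA_def using chainP chainQ by blast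

lemma cA_C: "cA w a \<Longrightarrow> w \<in> C \<and> a \<in> C"
  unfolding cA_def by auto

lemma cA_refl: "c \<in> C \<Longrightarrow> cA c c"
  unfolding cA_def by (auto simp: in_set_conv_nth)

lemma stepP: assumes "cA w (P!i)" "Suc i < length P" shows "cA w (P!Suc i)"
  using assms(1)[unfolded cA_def]
proof (elim disjE exE conjE)
  fix i' j' assume a: "i' \<le> j'" "j' < length P" "w = P!i'" "P!i = P!j'"
  then have "j' = i" using nthP_eq[of i j'] Pne assms(2) by auto
  then have hh: "i' \<le> Suc i" "Suc i < length P" "w = P!i'" using a assms(2) by auto
  show ?thesis unfolding cA_def
    apply (rule disjI1, rule exI[of _ i'], rule exI[of _ "Suc i"]) using hh by simp
next
  fix i' j' assume a: "i' \<le> j'" "j' < length Q" "w = Q!i'" "P!i = Q!j'"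
  then have "P!i \<in> set Q" by auto
  then have "i = 0" using P_in_Q[of i] assms(2) by auto
  then have "Q!j' = Q!0" using a P0 Q0 by simp
  then have "j' = 0" using nthQ_eq[of j' 0] Qne a Qne by auto
  then have "w = P!0" using a P0 Q0 by simp
  show ?thesis unfolding cA_def
    apply (rule disjI1, rule exI[of _ 0], rule exI[of _ "Suc i"]) using \<open>w = P!0\<close> assms(2) by simp
qed

lemma stepQ: "cA w (Q!i) \<Longrightarrow> Suc i < length Q \<Longrightarrow> cA w (Q!Suc i)"
  using elem.stepP[OF swap] unfolding cA_swap .

lemma anc_iff: "(w,a) \<in> E\<^sup>* \<longleftrightarrow> w = a \<or> cA w a \<or> (\<exists>c\<in>C-{r}. a = lf c \<and> cA w c)"
proof
  assume "(w,a) \<in> E\<^sup>*"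
  then show "w = a \<or> cA w a \<or> (\<exists>c\<in>C-{r}. a = lf c \<and> cA w c)"
  proof (induction rule: rtrancl_induct)
    case base then show ?case by simp
  next
    case (step y z)
    have yC: "cA w y" if "y \<in> C" using step.IH that cA_C cA_refl lf_X notX by metis
    from step.hyps(2)[unfolded E_iff] show ?case
    proof (elim disjE exE conjE)
      fix i assume "Suc i < length P" "y = P!i" "z = P!Suc i"
      then show ?case using yC stepP by auto
    next
      fix i assume "Suc i < length Q" "y = Q!i" "z = Q!Suc i"
      then show ?case using yC stepQ by auto
    next
      assume "y \<in> C - {r}" "z = lf y" then show ?case using yC by auto
    qed
  qed
next
  assume "w = a \<or> cA w a \<or> (\<exists>c\<in>C-{r}. a = lf c \<and> cA w c)"
  then show "(w,a) \<in> E\<^sup>*"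
  proof (elim disjE bexE conjE)
    fix c assume "c \<in> C - {r}" "a = lf c" "cA w c"
    then show ?thesis using cA_rt edge_lf by (meson rtrancl.rtrancl_into_rtrancl)
  qed (auto simp: cA_rt)
qed

lemma anc_leaf: assumes "c \<in> C - {r}" shows "(w, lf c) \<in> E\<^sup>* \<longleftrightarrow> w = lf c \<or> cA w c"
  unfolding anc_iff using assms lf_inj lf_X notX cA_C by metis

lemma lca_anc: assumes "c \<in> C - {r}" "d \<in> C - {r}" "c \<noteq> d" "cA c d"
  shows "lca V E (lf c) (lf d) = c"
proof (rule lca_eqI[OF acyc])
  show "c \<in> V" using assms Vdef by auto
  show "(c, lf c) \<in> E\<^sup>*" using anc_leaf[OF assms(1)] cA_refl assms by auto
  show "(c, lf d) \<in> E\<^sup>*" using anc_leaf[OF assms(2)] assms by auto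
  fix w assume w: "(w, lf c) \<in> E\<^sup>*" "(w, lf d) \<in> E\<^sup>*"
  then have "w = lf c \<or> cA w c" "w = lf d \<or> cA w d" using anc_leaf assms by auto
  then have "cA w c" using assms lf_inj lf_X notX cA_C by metis
  then show "(w, c) \<in> E\<^sup>*" by (rule cA_rt)
qed

lemma cA_Pint: assumes "0 < i" "i < length P - 1" "cA w (P!i)" shows "\<exists>i'\<le>i. w = P!i'"
  using assms(3) unfolding cA_def
proof (elim disjE exE conjE)
  fix i' j' assume "i' \<le> j'" "j' < length P" "w = P!i'" "P!i = P!j'"
  then show ?thesis using nthP_eq[of i j'] Pne assms by auto
next
  fix i' j' assume "j' < length Q" "P!i = Q!j'"
  then show ?thesis using Pint_notQ[OF assms(1,2)] by (metis nth_mem)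
qed

lemma cA_Qint: "0 < i \<Longrightarrow> i < length Q - 1 \<Longrightarrow> cA w (Q!i) \<Longrightarrow> \<exists>i'\<le>i. w = Q!i'"
  using elem.cA_Pint[OF swap] unfolding cA_swap .

lemma lca_cross: assumes i: "0 < i" "i < length P - 1" and j: "0 < j" "j < length Q - 1"
  shows "lca V E (lf (P!i)) (lf (Q!j)) = r"
proof (rule lca_eqI[OF acyc])
  have iP: "i < length P" and jQ: "j < length Q" using i j by linarith+
  have c: "P!i \<in> C - {r}" using P_ne_r[of i] iP i by auto
  have d: "Q!j \<in> C - {r}" using Q_ne_r[of j] jQ j by auto
  show "r \<in> V" using Vdef r_C by auto
  have "cA r (P!i)" unfolding cA_def using iP P0 by (metis le0)
  then show "(r, lf (P!i)) \<in> E\<^sup>*" using anc_leaf[OF c] by auto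
  have "cA r (Q!j)" unfolding cA_def using jQ Q0 by (metis le0)
  then show "(r, lf (Q!j)) \<in> E\<^sup>*" using anc_leaf[OF d] by auto
  fix w assume w: "(w, lf (P!i)) \<in> E\<^sup>*" "(w, lf (Q!j)) \<in> E\<^sup>*"
  then have "w = lf (P!i) \<or> cA w (P!i)" "w = lf (Q!j) \<or> cA w (Q!j)" using anc_leaf c d by auto
  moreover have "P!i \<noteq> Q!j" using Pint_notQ[OF i] jQ by auto
  ultimately have "cA w (P!i)" "cA w (Q!j)" using c d lf_inj lf_X notX cA_C by metis+
  then obtain i' j' where "i' \<le> i" "w = P!i'" "j' \<le> j" "w = Q!j'"
    using cA_Pint[OF i] cA_Qint[OF j] by metis
  moreover have "i' < length P" "j' < length Q" using calculation iP jQ by linarith+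
  ultimately have "w \<in> set P \<inter> set Q" "w \<noteq> h" using P_ne_h[of i'] i nth_mem[of j' Q] nth_mem[of i' P] by auto
  then have "w = r" using inter by auto
  then show "(w, r) \<in> E\<^sup>*" by simp
qed


lemma card_C: "card C = length P + length Q - 2"
proof -
  have "card C + card (set P \<inter> set Q) = card (set P) + card (set Q)"
    using card_Un_Int[of "set P" "set Q"] by simp
  moreover have "card (set P \<inter> set Q) = 2" using inter rh by simp
  moreover have "card (set P) = length P" "card (set Q) = length Q" using dP dQ by (auto simp: distinct_card)
  ultimately show ?thesis by simp
qed

lemma card_X: "card X + 1 = card C"
proof -
  have "card X = card (C - {r})" using bij by (simp add: bij_betw_same_card)
  also have "\<dots> = card C - 1" using r_C by simp
  finally show ?thesis using r_C card_gt_0_iff[of C] by auto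
qed

lemma rh_edge: assumes "(r, h) \<in> E" shows "length P = 2 \<or> length Q = 2"
  using assms[unfolded E_iff]
proof (elim disjE exE conjE)
  fix i assume a: "Suc i < length P" "r = P!i" "h = P!Suc i"
  then have "i = 0" using nthP_eq[of i 0] Pne P0 by auto
  moreover have "Suc i = length P - 1" using a nthP_eq[of "Suc i" "length P - 1"] Pne Plast by auto
  ultimately show ?thesis by auto
next
  fix i assume a: "Suc i < length Q" "r = Q!i" "h = Q!Suc i"
  then have "i = 0" using nthQ_eq[of i 0] Qne Q0 by auto
  moreover have "Suc i = length Q - 1" using a nthQ_eq[of "Suc i" "length Q - 1"] Qne Qlast by auto
  ultimately show ?thesis by auto
qed auto

lemma weak_imp: assumes es: "elementary_sides V E X P' Q'" and w: "weak_sides P' Q'"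
  shows "(r, h) \<in> E \<or> card (V - X) = 4"
proof -
  from es obtain lf' where
    l: "length P' \<ge> 2" "length Q' \<ge> 2" "\<not> (length P' = 2 \<and> length Q' = 2)"
      "distinct P'" "distinct Q'" "hd P' = net_root V E" "hd Q' = hd P'" "last Q' = last P'"
      "hybrid E (last P')" "set P' \<inter> set Q' = {hd P', last P'}"
      "(set P' \<union> set Q') \<inter> X = {}" "V = set P' \<union> set Q' \<union> X"
      "bij_betw lf' (set P' \<union> set Q' - {hd P'}) X"
      "E = set (zip P' (tl P')) \<union> set (zip Q' (tl Q')) \<union> {(c, lf' c) | c. c \<in> set P' \<union> set Q' - {hd P'}}"
    unfolding elementary_sides_def Let_def by blast
  interpret e2: elem P' Q' X lf' V E using l by unfold_locales auto
  have r': "hd P' = r" using l(6) root by simp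
  have "last P' \<in> V" using l(12) e2.h_C by auto
  then have h': "last P' = h" using l(9) hyb_iff by blast
  have VX: "V - X = set P' \<union> set Q'" using l(11,12) by auto
  from w[unfolded weak_sides_def] show ?thesis
  proof (elim disjE conjE)
    assume "length P' = 2"
    then have "(P'!0, P'!Suc 0) \<in> E" using e2.edgeP[of 0] by simp
    moreover have "P'!Suc 0 = last P'" using e2.Plast \<open>length P' = 2\<close> by simp
    ultimately show ?thesis using e2.P0 r' h' by simp
  next
    assume "length Q' = 2"
    then have "(Q'!0, Q'!Suc 0) \<in> E" using e2.edgeQ[of 0] by simp
    moreover have "Q'!Suc 0 = last P'" using e2.Qlast \<open>length Q' = 2\<close> by simp
    ultimately show ?thesis using e2.Q0 r' h' by simp
  next
    assume "length P' = 3" "length Q' = 3"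
    then show ?thesis using e2.card_C VX by simp
  qed
qed

end



definition chain_ok :: "'a graph \<Rightarrow> 'a list \<Rightarrow> bool list \<Rightarrow> bool" where
 "chain_ok G ys ls \<longleftrightarrow> distinct ys \<and> length ys \<ge> 2 \<and> length ls + 1 = length ys \<and>
    (\<forall>i. Suc i < length ls \<longrightarrow> ls!i \<noteq> ls!Suc i) \<and>
    (\<forall>i j. i < j \<and> j < length ys \<longrightarrow> ({ys!i, ys!j} \<in> snd G \<longleftrightarrow> ls!i))"

lemma card_empty_fin: "finite A \<Longrightarrow> card A = 0 \<Longrightarrow> x \<in> A \<Longrightarrow> False" by auto

locale cat =
  fixes V :: "'b set" and E and X and L :: "'b list"
  assumes finV: "finite V" and EV: "E \<subseteq> V \<times> V"
    and noout: "\<And>u w. (u,w) \<in> E \<Longrightarrow> u \<notin> X"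
    and inner: "\<And>u w. (u,w) \<in> E \<Longrightarrow> w \<notin> X \<Longrightarrow> (u,w) \<in> set (zip L (tl L))"
    and innerE: "set (zip L (tl L)) \<subseteq> E"
    and setL: "set L = V - X" and dL: "distinct L" and acyc: "acyclic E"
    and uniqpar: "\<And>u u' x. x \<in> X \<Longrightarrow> (u,x) \<in> E \<Longrightarrow> (u',x) \<in> E \<Longrightarrow> u = u'"
begin

definition cA where "cA w a \<longleftrightarrow> (\<exists>i j. i \<le> j \<and> j < length L \<and> w = L!i \<and> a = L!j)"

lemma nthL_eq: "i < length L \<Longrightarrow> j < length L \<Longrightarrow> L!i = L!j \<longleftrightarrow> i = j"
  using dL nth_eq_iff_index_eq by blast

lemma edgeL: assumes "Suc i < length L" shows "(L!i, L!Suc i) \<in> E"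
proof -
  have "(L!i, L!Suc i) \<in> set (zip L (tl L))" unfolding in_set_zip_tl using assms by blast
  then show ?thesis using innerE by blast
qed

lemma chain: "i \<le> j \<Longrightarrow> j < length L \<Longrightarrow> (L!i, L!j) \<in> E\<^sup>*"
proof (induction j)
  case 0 then show ?case by simp
next
  case (Suc j)
  show ?case
  proof (cases "i = Suc j")
    case True then show ?thesis by simp
  next
    case False
    then have "(L!i, L!j) \<in> E\<^sup>*" using Suc by auto
    moreover have "(L!j, L!Suc j) \<in> E" using edgeL Suc by auto
    ultimately show ?thesis by simp
  qed
qed

lemma cA_rt: "cA w a \<Longrightarrow> (w,a) \<in> E\<^sup>*" unfolding cA_def using chain by blast

lemma cA_L: "cA w a \<Longrightarrow> w \<in> set L \<and> a \<in> set L" unfolding cA_def by auto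

lemma anc: assumes "(w,a) \<in> E\<^sup>*" shows "w = a \<or> cA w a \<or> (\<exists>p. cA w p \<and> (p,a) \<in> E \<and> a \<in> X)"
  using assms
proof (induction rule: rtrancl_induct)
  case base then show ?case by simp
next
  case (step y z)
  have yL: "y \<in> set L" using noout[OF step.hyps(2)] EV step.hyps(2) setL by auto
  have cy: "cA w y"
    using step.IH
  proof (elim disjE exE conjE)
    assume "w = y" then show ?thesis using yL unfolding cA_def by (auto simp: in_set_conv_nth)
  next
    fix p assume "(p, y) \<in> E" "y \<in> X" then show ?thesis using noout step.hyps(2) by blast
  qed
  show ?case
  proof (cases "z \<in> X")
    case True then show ?thesis using cy step.hyps(2) by blast
  next
    case False
    then obtain i where i: "Suc i < length L" "y = L!i" "z = L!Suc i"
      using inner[OF step.hyps(2)] unfolding in_set_zip_tl by blast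
    from cy obtain i' j' where "i' \<le> j'" "j' < length L" "w = L!i'" "y = L!j'" unfolding cA_def by blast
    then have "j' = i" "i' \<le> Suc i" using i nthL_eq[of i j'] by auto
    then have "cA w z" unfolding cA_def using i \<open>w = L!i'\<close> by blast
    then show ?thesis by blast
  qed
qed

lemma lca_leaves: assumes "x \<in> X" "x' \<in> X" "x \<noteq> x'" "(L!p, x) \<in> E" "(L!p', x') \<in> E" "p \<le> p'" "p' < length L"
  shows "lca V E x x' = L!p"
proof (rule lca_eqI[OF acyc])
  have "p < length L" using assms(6,7) by linarith
  then have "L!p \<in> set L" by (rule nth_mem)
  then show "L!p \<in> V" using setL by blast
  show "(L!p, x) \<in> E\<^sup>*" using assms(4) by (rule r_into_rtrancl)
  have "(L!p, L!p') \<in> E\<^sup>*" using chain[of p p'] assms by blast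
  then show "(L!p, x') \<in> E\<^sup>*" using assms(5) by (rule rtrancl.rtrancl_into_rtrancl)
  fix w assume w: "(w, x) \<in> E\<^sup>*" "(w, x') \<in> E\<^sup>*"
  have xnL: "z \<notin> set L" if "z \<in> X" for z using that setL by auto
  from anc[OF w(1)] show "(w, L!p) \<in> E\<^sup>*"
  proof (elim disjE exE conjE)
    assume "w = x"
    have xL: "x \<notin> set L" using xnL assms(1) by blast
    from anc[OF w(2)] have False
    proof (elim disjE exE conjE)
      assume "w = x'" then show False using \<open>w = x\<close> assms(3) by simp
    next
      assume "cA w x'" then show False using cA_L \<open>w = x\<close> xL by blast
    next
      fix q assume "cA w q" then show False using cA_L \<open>w = x\<close> xL by blast
    qed
    then show ?thesis ..
  next
    assume "cA w x" then show ?thesis using cA_L xnL assms(1) by blast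
  next
    fix q assume "cA w q" "(q, x) \<in> E"
    then have "q = L!p" using uniqpar[OF assms(1)] assms(4) by blast
    then show ?thesis using cA_rt \<open>cA w q\<close> by blast
  qed
qed

end

lemma lab_bool: "a \<noteq> Odot \<Longrightarrow> b \<noteq> Odot \<Longrightarrow> a \<noteq> b \<Longrightarrow> (a = L1) \<noteq> (b = L1)"
  by (cases a; cases b) auto

lemma fin_card0: "finite A \<Longrightarrow> card A = 0 \<Longrightarrow> A = {}" by simp

lemma cat_analysis:
  fixes G :: "'a graph" and V :: "nat set"
  assumes dc: "disc_cotree_via G V E X t \<phi>" and cp: "caterpillar V E X"
    and ch: "cherry E X (\<phi> v) y" and vG: "v \<in> fst G"
  shows "\<exists>ys ls. chain_ok G ys ls \<and> set ys = fst G \<and> last ys = v"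
proof -
  have ln: "labeled_network V E X t" and tr: "is_tree V E X" and disc: "discriminating E X t"
    and ex: "explains_via G V E X t \<phi>" using dc unfolding disc_cotree_via_def by auto
  have net: "network V E X" using tr unfolding is_tree_def by auto
  obtain L where L: "L \<noteq> []" "distinct L" "set L = V - X" "hd L = net_root V E"
      "{(u, w) \<in> E. u \<in> V - X \<and> w \<in> V - X} = set (zip L (tl L))"
    using cp unfolding caterpillar_def by blast
  have out2: "\<And>u. u \<in> V - X \<Longrightarrow> outdeg E u = 2" using cp unfolding caterpillar_def by auto
  have finV: "finite V" and EV: "E \<subseteq> V \<times> V" and XV: "X \<subseteq> V" and ac: "acyclic E"
    using net unfolding network_def by auto
  have notsingle: "\<not> (\<exists>x. V = {x} \<and> X = {x} \<and> E = {})" using L(1,3) by (metis Diff_cancel set_empty)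
  then have leafdeg: "\<forall>x\<in>V. x \<in> X \<longleftrightarrow> outdeg E x = 0 \<and> indeg E x = 1"
    using net unfolding network_def by blast
  have finout: "finite {w. (u,w) \<in> E}" for u using finV EV by (auto intro: finite_subset)
  have finin: "finite {w. (w,u) \<in> E}" for u using finV EV by (auto intro: finite_subset)
  have noout: "u \<notin> X" if "(u,w) \<in> E" for u w
  proof
    assume "u \<in> X"
    then have "outdeg E u = 0" using leafdeg XV by auto
    then have "{w. (u,w) \<in> E} = {}" using finout unfolding outdeg_def by simp
    then show False using that by simp
  qed
  have inner: "(u,w) \<in> set (zip L (tl L))" if "(u,w) \<in> E" "w \<notin> X" for u w
    using that noout[OF that(1)] EV L(5) by blast
  have innerE: "set (zip L (tl L)) \<subseteq> E" unfolding L(5)[symmetric] by auto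
  have uniqpar: "u = u'" if "x \<in> X" "(u,x) \<in> E" "(u',x) \<in> E" for u u' x
  proof -
    have "indeg E x = 1" using leafdeg XV that(1) by auto
    then obtain z where z: "{w. (w,x) \<in> E} = {z}" unfolding indeg_def by (auto simp: card_1_singleton_iff)
    have "u \<in> {w. (w,x) \<in> E}" "u' \<in> {w. (w,x) \<in> E}" using that by auto
    then show ?thesis unfolding z by simp
  qed
  interpret c: cat V E X L
    by unfold_locales (use finV EV noout inner innerE L ac uniqpar in auto)
  define s where "s = length L"
  have s1: "s \<ge> 1" using L(1) s_def by (cases L) auto
  have LX: "L!i \<notin> X" "L!i \<in> V" if "i < s" for i using that L(3) s_def nth_mem[of i L] by auto
  have succ: "w = L!Suc i" if a: "(L!i, w) \<in> E" "w \<notin> X" "i < s" for i w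
  proof -
    obtain k where k: "Suc k < length L" "L!i = L!k" "w = L!Suc k"
      using inner[OF a(1,2)] unfolding in_set_zip_tl by blast
    then have "k = i" using c.nthL_eq[of i k] a s_def by auto
    then show ?thesis using k by simp
  qed
  have card2: "card {w. (L!i, w) \<in> E} = 2" if "i < s" for i
    using out2 LX[OF that] unfolding outdeg_def by auto
  have leafchild: "\<exists>!c. c \<in> X \<and> (L!i, c) \<in> E" if si: "Suc i < s" for i
  proof -
    obtain a b where ab: "a \<noteq> b" "{w. (L!i, w) \<in> E} = {a, b}"
      using card2[of i] si by (auto simp: card_2_iff)
    have nx: "L!Suc i \<notin> X" using LX[of "Suc i"] si by auto
    have ex: "\<exists>c. c \<in> X \<and> (L!i, c) \<in> E"
    proof (cases "a = L!Suc i")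
      case True
      then have "b \<noteq> L!Suc i" "(L!i, b) \<in> E" using ab by auto
      then show ?thesis using succ[of i b] si by auto
    next
      case False
      then have "(L!i, a) \<in> E" using ab by auto
      then show ?thesis using succ[of i a] si False by auto
    qed
    have un: "c1 = c2" if "c1 \<in> X" "(L!i, c1) \<in> E" "c2 \<in> X" "(L!i, c2) \<in> E" for c1 c2
    proof (rule ccontr)
      assume ne: "c1 \<noteq> c2"
      have "(L!i, L!Suc i) \<in> E" using c.edgeL \<open>Suc i < s\<close> s_def by auto
      then have "{c1, c2, L!Suc i} \<subseteq> {w. (L!i, w) \<in> E}" using that by auto
      moreover have "card {c1, c2, L!Suc i} = 3"
      proof -
        have "c1 \<noteq> L!Suc i" "c2 \<noteq> L!Suc i" using that nx by auto
        then show ?thesis using ne by simp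
      qed
      ultimately have "3 \<le> card {w. (L!i, w) \<in> E}" using finout by (metis card_mono)
      then show False using card2[of i] \<open>Suc i < s\<close> by auto
    qed
    show ?thesis using ex un by blast
  qed
  have lastchildren: "{w. (L!(s-1), w) \<in> E} \<subseteq> X"
  proof
    fix w assume "w \<in> {w. (L!(s-1), w) \<in> E}"
    then have e: "(L!(s-1), w) \<in> E" by simp
    show "w \<in> X"
    proof (rule ccontr)
      assume "w \<notin> X"
      then have "w = L!Suc (s-1)" using succ[OF e] s1 by auto
      moreover have "w \<in> V" using e EV by auto
      moreover have "w \<notin> X" by fact
      ultimately have "w \<in> set L" using L(3) by auto
      then obtain k where "k < s" "w = L!k" using s_def by (auto simp: in_set_conv_nth)
      then have "(L!(s-1), L!k) \<in> set (zip L (tl L))" using inner e \<open>w \<notin> X\<close> by auto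
      then obtain k' where "Suc k' < s" "L!(s-1) = L!k'" using s_def unfolding in_set_zip_tl by auto
      moreover have "s - 1 < length L" "k' < length L" using s1 s_def calculation by auto
      ultimately have "s - 1 = k'" using c.nthL_eq[of "s-1" k'] by auto
      then show False using \<open>Suc k' < s\<close> by auto
    qed
  qed
  obtain p where p: "(p, \<phi> v) \<in> E" "(p, y) \<in> E" and vy: "\<phi> v \<in> X" "y \<in> X" "\<phi> v \<noteq> y"
    using ch unfolding cherry_def by blast
  have "p \<in> set L" using noout[OF p(1)] p(1) EV L(3) by auto
  then obtain q where q: "q < s" "p = L!q" using s_def by (auto simp: in_set_conv_nth)
  have qs: "q = s - 1"
  proof (rule ccontr)
    assume "q \<noteq> s - 1"
    then have "Suc q < s" using q by auto
    then show False using leafchild[of q] p q vy by blast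
  qed
  have lastset: "{w. (L!(s-1), w) \<in> E} = {\<phi> v, y}"
  proof -
    have "{\<phi> v, y} \<subseteq> {w. (L!(s-1), w) \<in> E}" using p q qs by auto
    moreover have "card {\<phi> v, y} = 2" using vy by auto
    moreover have "card {w. (L!(s-1), w) \<in> E} = 2" using card2[of "s-1"] s1 by simp
    ultimately show ?thesis using card_subset_eq[OF finout] by metis
  qed
  define lc where "lc i = (THE c. c \<in> X \<and> (L!i, c) \<in> E)" for i
  have lc: "lc i \<in> X \<and> (L!i, lc i) \<in> E" if "Suc i < s" for i
    unfolding lc_def using theI'[OF leafchild[OF that]] .
  define xs where "xs = map lc [0..<s-1] @ [y, \<phi> v]"
  have lxs: "length xs = s + 1" unfolding xs_def using s1 by simp
  have xs_par: "xs!i \<in> X \<and> (L!(min i (s-1)), xs!i) \<in> E" if ii: "i < s + 1" for i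
  proof -
    consider "i < s - 1" | "i = s - 1" | "i = s" using ii by linarith
    then show ?thesis
    proof cases
      case 1 then show ?thesis unfolding xs_def using lc[of i] by (auto simp: nth_append)
    next
      case 2 then show ?thesis unfolding xs_def using vy lastset by (auto simp: nth_append)
    next
      case 3 then show ?thesis unfolding xs_def using vy lastset s1 by (auto simp: nth_append)
    qed
  qed
  have dxs: "distinct xs"
    unfolding distinct_conv_nth
  proof (intro allI impI)
    fix i j assume ij: "i < length xs" "j < length xs" "i \<noteq> j"
    show "xs!i \<noteq> xs!j"
    proof
      assume e: "xs!i = xs!j"
      have "L!(min i (s-1)) = L!(min j (s-1))"
        using uniqpar[of "xs!i"] xs_par[of i] xs_par[of j] ij lxs e by auto
      then have "min i (s-1) = min j (s-1)" using c.nthL_eq s_def s1 by auto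
      then have "{i, j} = {s-1, s}" using ij lxs by auto
      moreover have "xs!(s-1) = y" "xs!s = \<phi> v" unfolding xs_def using s1 by (auto simp: nth_append)
      ultimately show False using e vy by (auto simp: doubleton_eq_iff)
    qed
  qed
  have sxs: "set xs = X"
  proof
    show "set xs \<subseteq> X" using xs_par lxs by (auto simp: in_set_conv_nth)
    show "X \<subseteq> set xs"
    proof
      fix x assume x: "x \<in> X"
      then have "indeg E x = 1" using leafdeg XV by auto
      then obtain u where u: "(u, x) \<in> E" unfolding indeg_def by (auto simp: card_1_singleton_iff)
      then have "u \<in> set L" using noout EV L(3) by auto
      then obtain k where k: "k < s" "u = L!k" using s_def by (auto simp: in_set_conv_nth)
      show "x \<in> set xs"
      proof (cases "Suc k < s")
        case True
        then have "x = lc k" using leafchild[OF True] lc[OF True] x u k by blast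
        moreover have "xs!k = lc k" unfolding xs_def using True by (auto simp: nth_append)
        moreover have "k < length xs" using lxs True by simp
        ultimately show ?thesis by (metis nth_mem)
      next
        case False
        then have "k = s - 1" using k by auto
        then have "x \<in> {\<phi> v, y}" using lastset u k by auto
        then show ?thesis unfolding xs_def by auto
      qed
    qed
  qed
  have bij: "bij_betw \<phi> (fst G) X" using ex unfolding explains_via_def by auto
  define ys where "ys = map (inv_into (fst G) \<phi>) xs"
  have bij': "bij_betw (inv_into (fst G) \<phi>) X (fst G)" using bij by (rule bij_betw_inv_into)
  have dys: "distinct ys" unfolding ys_def using dxs bij' sxs
    by (simp add: distinct_map bij_betw_def inj_on_subset)
  have sys: "set ys = fst G" unfolding ys_def using sxs bij' by (simp add: bij_betw_def)
  have phys: "\<phi> (ys!i) = xs!i" if "i < length xs" for i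
    unfolding ys_def using that sxs bij by (auto simp: bij_betw_def f_inv_into_f)
  have lys: "length ys = s + 1" unfolding ys_def using lxs by simp
  have lastys: "last ys = v"
  proof -
    have "last xs = \<phi> v" unfolding xs_def by simp
    moreover have "xs \<noteq> []" using lxs by auto
    ultimately have "last ys = inv_into (fst G) \<phi> (\<phi> v)" unfolding ys_def
      by (simp add: last_map)
    also have "\<dots> = v" using bij vG by (simp add: bij_betw_def inv_into_f_f)
    finally show ?thesis .
  qed
  define ls where "ls = map (\<lambda>i. t (L!i) = L1) [0..<s]"
  have tlab: "t (L!i) \<noteq> Odot" if "i < s" for i using ln LX[OF that] unfolding labeled_network_def by auto
  have "chain_ok G ys ls"
    unfolding chain_ok_def
  proof (intro conjI allI impI)
    show "distinct ys" by (rule dys)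
    show "2 \<le> length ys" using lys s1 by simp
    show "length ls + 1 = length ys" using lys ls_def by simp
  next
    fix i assume i: "Suc i < length ls"
    then have si: "Suc i < s" using ls_def by simp
    have "(L!i, L!Suc i) \<in> E" using c.edgeL si s_def by auto
    then have "t (L!i) \<noteq> t (L!Suc i)" using disc LX[of i] LX[of "Suc i"] si unfolding discriminating_def by auto
    moreover have "ls!i = (t (L!i) = L1)" "ls!Suc i = (t (L!Suc i) = L1)" unfolding ls_def using si by simp_all
    moreover have "t (L!i) \<noteq> Odot" "t (L!Suc i) \<noteq> Odot" using tlab si by auto
    ultimately show "ls!i \<noteq> ls!Suc i" using lab_bool by metis
  next
    fix i j assume ij: "i < j \<and> j < length ys"
    then have i1: "i < s" "j < s + 1" using lys by auto
    have ne: "ys!i \<noteq> ys!j" using dys ij nth_eq_iff_index_eq by fastforce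
    have "ys!i \<in> set ys" "ys!j \<in> set ys" using ij by auto
    then have inG: "ys!i \<in> fst G" "ys!j \<in> fst G" unfolding sys .
    have "({ys!i, ys!j} \<in> snd G) \<longleftrightarrow> t (lca V E (\<phi> (ys!i)) (\<phi> (ys!j))) = L1"
      using ex inG ne unfolding explains_via_def by blast
    also have "lca V E (\<phi> (ys!i)) (\<phi> (ys!j)) = L!i"
    proof -
      have "lca V E (xs!i) (xs!j) = L!(min i (s-1))"
      proof (rule c.lca_leaves)
        show "xs!i \<in> X" using xs_par[of i] i1 by linarith
        show "xs!j \<in> X" using xs_par[of j] i1 by linarith
        show "xs!i \<noteq> xs!j" using dxs ij lxs lys nth_eq_iff_index_eq by fastforce
        show "(L!(min i (s-1)), xs!i) \<in> E" using xs_par[of i] i1 by linarith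
        show "(L!(min j (s-1)), xs!j) \<in> E" using xs_par[of j] i1 by linarith
        show "min i (s-1) \<le> min j (s-1)" using ij by auto
        show "min j (s-1) < length L" using s_def s1 by auto
      qed
      moreover have "min i (s-1) = i" using i1 by auto
      ultimately show ?thesis using phys lxs i1 by simp
    qed
    finally show "({ys!i, ys!j} \<in> snd G) = ls!i" unfolding ls_def using i1 by simp
  qed
  then show ?thesis using sys lastys by blast
qed




locale mk = fixes s :: nat assumes s1: "s \<ge> 1"
begin

definition "mV = {..<s+s+1}"
definition "mX = {s..<s+s+1}"
definition "par i = min i (s-1)"
definition "mE = {(i, Suc i) | i. Suc i < s} \<union> {(par i, s+i) | i. i < s+1}"
definition "mL = [0..<s]"

lemma mE_iff: "(a,b) \<in> mE \<longleftrightarrow> (b = Suc a \<and> b < s) \<or> (s \<le> b \<and> b < s+s+1 \<and> a = par (b - s))"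
  unfolding mE_def by (auto simp: par_def)

lemma in_nb0: "{u. (u,0) \<in> mE} = {}"
  using s1 by (auto simp: mE_iff)
lemma in_nb1: "0 < w \<Longrightarrow> w < s \<Longrightarrow> {u. (u,w) \<in> mE} = {w - 1}"
  by (auto simp: mE_iff)
lemma in_nb2: "s \<le> w \<Longrightarrow> w < s+s+1 \<Longrightarrow> {u. (u,w) \<in> mE} = {par (w - s)}"
  by (auto simp: mE_iff)

lemma out_nb1: assumes "w < s - 1" shows "{u. (w,u) \<in> mE} = {Suc w, s + w}"
proof -
  have "u = Suc w \<or> u = s + w" if "(w,u) \<in> mE" for u
    using that assms unfolding mE_iff par_def by (auto simp: min_def split: if_splits)
  moreover have "(w, Suc w) \<in> mE" "(w, s + w) \<in> mE" using assms unfolding mE_iff par_def by auto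
  ultimately show ?thesis by blast
qed
lemma out_nb2: assumes "w = s - 1" shows "{u. (w,u) \<in> mE} = {s+s-1, s+s}"
proof -
  have "u = s+s-1 \<or> u = s + s" if "(w,u) \<in> mE" for u
    using that assms s1 unfolding mE_iff par_def by (auto simp: min_def split: if_splits)
  moreover have "(w, s+s-1) \<in> mE" "(w, s + s) \<in> mE" using assms s1 unfolding mE_iff par_def by auto
  ultimately show ?thesis by blast
qed
lemma out_nb3: assumes "s \<le> w" shows "{u. (w,u) \<in> mE} = {}"
  using assms s1 unfolding mE_iff par_def by auto

lemma indeg_mk: assumes "w \<in> mV" shows "indeg mE w = (if w = 0 then 0 else 1)"
proof -
  consider "w = 0" | "0 < w \<and> w < s" | "s \<le> w \<and> w < s+s+1" using assms unfolding mV_def by force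
  then show ?thesis unfolding indeg_def using in_nb0 in_nb1 in_nb2 s1 by cases auto
qed

lemma outdeg_mk: assumes "w \<in> mV" shows "outdeg mE w = (if w < s then 2 else 0)"
proof -
  consider "w < s - 1" | "w = s - 1" | "s \<le> w" using s1 by linarith
  then show ?thesis unfolding outdeg_def using out_nb1 out_nb2 out_nb3 s1 by cases auto
qed

lemma X_iff: "w \<in> mV \<Longrightarrow> w \<in> mX \<longleftrightarrow> \<not> w < s"
  unfolding mV_def mX_def by auto

lemma acyc_mk: "acyclic mE"
  using s1 by (intro acyclic_rank[where f=id]) (auto simp: mE_def par_def min_def)

lemma EV_mk: "mE \<subseteq> mV \<times> mV"
  unfolding mE_def mV_def par_def by auto

lemma zeroV: "0 \<in> mV" unfolding mV_def by auto

lemma net_mk: "network mV mE mX"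
  unfolding network_def
proof (intro conjI disjI2)
  show "finite mV" unfolding mV_def by simp
  show "mE \<subseteq> mV \<times> mV" by (rule EV_mk)
  show "mX \<subseteq> mV" unfolding mV_def mX_def by auto
  show "acyclic mE" by (rule acyc_mk)
  show "\<exists>!x. x \<in> mV \<and> indeg mE x = 0"
    using zeroV indeg_mk by (intro ex1I[of _ 0]) (auto split: if_splits)
  show "\<forall>x\<in>mV. indeg mE x = 0 \<longrightarrow> 2 \<le> outdeg mE x"
    using indeg_mk outdeg_mk s1 by (auto split: if_splits)
  show "\<forall>x\<in>mV. (x \<in> mX) = (outdeg mE x = 0 \<and> indeg mE x = 1)"
    using indeg_mk outdeg_mk X_iff s1 by (auto split: if_splits)
  show "\<forall>v\<in>mV. indeg mE v \<noteq> 0 \<and> v \<notin> mX \<longrightarrow> indeg mE v = 1 \<and> 2 \<le> outdeg mE v \<or> indeg mE v = 2 \<and> 1 \<le> outdeg mE v"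
    using indeg_mk outdeg_mk X_iff by (auto split: if_splits)
qed

lemma root_mk: "net_root mV mE = 0"
  unfolding net_root_def using zeroV indeg_mk by (intro the_equality) (auto split: if_splits)

lemma tree_mk: "is_tree mV mE mX"
  unfolding is_tree_def using net_mk indeg_mk by auto

lemma zipL: "set (zip mL (tl mL)) = {(i, Suc i) | i. Suc i < s}"
proof -
  have "(a,b) \<in> set (zip mL (tl mL)) \<longleftrightarrow> (b = Suc a \<and> Suc a < s)" for a b
    unfolding in_set_zip_tl by (auto simp: mL_def)
  then show ?thesis by auto
qed

lemma inner_mk: "{(u, w) \<in> mE. u \<in> mV - mX \<and> w \<in> mV - mX} = set (zip mL (tl mL))"
  unfolding zipL using X_iff unfolding mE_iff mV_def mX_def by auto

lemma cat_mk: "caterpillar mV mE mX"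
  unfolding caterpillar_def
proof (intro conjI)
  show "is_tree mV mE mX" by (rule tree_mk)
  show "\<forall>v\<in>mV - mX. outdeg mE v = 2" using outdeg_mk X_iff by auto
  show "\<exists>L. L \<noteq> [] \<and> distinct L \<and> set L = mV - mX \<and> hd L = net_root mV mE \<and>
        {(u, w) \<in> mE. u \<in> mV - mX \<and> w \<in> mV - mX} = set (zip L (tl L))"
  proof (intro exI conjI)
    show "mL \<noteq> []" "distinct mL" unfolding mL_def using s1 by auto
    show "set mL = mV - mX" unfolding mL_def mV_def mX_def by auto
    show "hd mL = net_root mV mE" unfolding root_mk mL_def using s1 by (simp add: hd_upt)
    show "{(u, w) \<in> mE. u \<in> mV - mX \<and> w \<in> mV - mX} = set (zip mL (tl mL))" by (rule inner_mk)
  qed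
qed

lemma cat_loc: "cat mV mE mX mL"
proof
  show "finite mV" unfolding mV_def by simp
  show "mE \<subseteq> mV \<times> mV" by (rule EV_mk)
  show "u \<notin> mX" if "(u,w) \<in> mE" for u w using that s1 unfolding mE_iff mX_def par_def by auto
  show "(u,w) \<in> set (zip mL (tl mL))" if "(u,w) \<in> mE" "w \<notin> mX" for u w
    using that unfolding zipL mE_iff mX_def by auto
  show "set (zip mL (tl mL)) \<subseteq> mE" unfolding zipL by (auto simp: mE_iff)
  show "set mL = mV - mX" unfolding mL_def mV_def mX_def by auto
  show "distinct mL" unfolding mL_def by simp
  show "acyclic mE" by (rule acyc_mk)
  show "u = u'" if "x \<in> mX" "(u,x) \<in> mE" "(u',x) \<in> mE" for u u' x
    using that unfolding mE_iff mX_def by auto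
qed

lemma lca_mk: assumes "i < j" "j < s + 1" shows "lca mV mE (s+i) (s+j) = i"
proof -
  interpret c: cat mV mE mX mL by (rule cat_loc)
  have "lca mV mE (s+i) (s+j) = mL ! (par i)"
  proof (rule c.lca_leaves)
    show "s + i \<in> mX" "s + j \<in> mX" using assms unfolding mX_def by auto
    show "s + i \<noteq> s + j" using assms by simp
    show "(mL ! par i, s + i) \<in> mE" "(mL ! par j, s + j) \<in> mE"
      unfolding mE_iff mL_def par_def using assms s1 by auto
    show "par i \<le> par j" unfolding par_def using assms by auto
    show "par j < length mL" unfolding par_def mL_def using s1 by auto
  qed
  moreover have "mL ! (par i) = i" unfolding mL_def par_def using assms by auto
  ultimately show ?thesis by simp
qed

end



lemma least_idx: "distinct xs \<Longrightarrow> i < length xs \<Longrightarrow> (LEAST j. j < length xs \<and> xs!j = xs!i) = i"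
  by (rule Least_equality) (use nth_eq_iff_index_eq in \<open>auto simp: not_less[symmetric]\<close>)

lemma chain_adj: assumes "chain_ok G ys ls" "i < length ys" "j < length ys" "i \<noteq> j"
  shows "{ys!i, ys!j} \<in> snd G \<longleftrightarrow> ls!(min i j)"
proof (cases "i < j")
  case True then show ?thesis using assms unfolding chain_ok_def by auto
next
  case False
  then have "j < i" using assms by auto
  then have "{ys!j, ys!i} \<in> snd G \<longleftrightarrow> ls!j" using assms unfolding chain_ok_def by blast
  then show ?thesis using \<open>j < i\<close> by (simp add: insert_commute min_def)
qed

lemma chain_induced: assumes "set ys = S" shows "chain_ok (induced G S) ys ls \<longleftrightarrow> chain_ok G ys ls"
proof -
  have "{ys!i, ys!j} \<in> snd (induced G S) \<longleftrightarrow> {ys!i, ys!j} \<in> snd G" if "i < length ys" "j < length ys" for i j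
    using that assms unfolding induced_def by auto
  note HH = this
  have H: "\<And>i j. i < j \<and> j < length ys \<Longrightarrow> ({ys!i, ys!j} \<in> snd (induced G S)) = ({ys!i, ys!j} \<in> snd G)"
    using HH by (meson order.strict_trans)
  show ?thesis unfolding chain_ok_def
  proof (intro conj_cong refl)
    show "(\<forall>i j. i < j \<and> j < length ys \<longrightarrow> ({ys!i, ys!j} \<in> snd (induced G S)) = ls!i) =
          (\<forall>i j. i < j \<and> j < length ys \<longrightarrow> ({ys!i, ys!j} \<in> snd G) = ls!i)"
      using H by blast
  qed
qed

lemma cograph_chain: assumes ch: "chain_ok G ys ls" and sys: "set ys = fst G" shows "cograph G"
  unfolding cograph_def
proof (intro notI, elim bexE conjE)
  fix a b c d assume in4: "a \<in> fst G" "b \<in> fst G" "c \<in> fst G" "d \<in> fst G"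
    and dis: "distinct [a, b, c, d]" and e: "{a, b} \<in> snd G" "{b, c} \<in> snd G" "{c, d} \<in> snd G"
    "{a, c} \<notin> snd G" "{b, d} \<notin> snd G" "{a, d} \<notin> snd G"
  obtain ia where ia: "ia < length ys" "a = ys!ia" using in4 sys by (metis in_set_conv_nth)
  obtain ib where ib: "ib < length ys" "b = ys!ib" using in4 sys by (metis in_set_conv_nth)
  obtain ic where ic: "ic < length ys" "c = ys!ic" using in4 sys by (metis in_set_conv_nth)
  obtain id where id: "id < length ys" "d = ys!id" using in4 sys by (metis in_set_conv_nth)
  have ne: "ia \<noteq> ib" "ia \<noteq> ic" "ia \<noteq> id" "ib \<noteq> ic" "ib \<noteq> id" "ic \<noteq> id"
    using dis ia ib ic id by auto
  have A: "({x, y} \<in> snd G) = ls!(min ix iy)" if "ix < length ys" "iy < length ys" "ix \<noteq> iy" "x = ys!ix" "y = ys!iy" for x y ix iy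
    using chain_adj[OF ch that(1-3)] that(4,5) by simp
  consider "ia \<le> ib \<and> ia \<le> ic \<and> ia \<le> id" | "ib \<le> ia \<and> ib \<le> ic \<and> ib \<le> id"
    | "ic \<le> ia \<and> ic \<le> ib \<and> ic \<le> id" | "id \<le> ia \<and> id \<le> ib \<and> id \<le> ic" by linarith
  then show False
  proof cases
    case 1
    then have "ls!ia" "\<not> ls!ia" using A[OF ia(1) ib(1) ne(1) ia(2) ib(2)] A[OF ia(1) ic(1) ne(2) ia(2) ic(2)] e
      using ne by (auto simp: min_def)
    then show False by simp
  next
    case 2
    then have "ls!ib" "\<not> ls!ib" using A[OF ia(1) ib(1) ne(1) ia(2) ib(2)] A[OF ib(1) id(1) ne(5) ib(2) id(2)] e
      using ne by (auto simp: min_def)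
    then show False by simp
  next
    case 3
    then have "ls!ic" "\<not> ls!ic" using A[OF ib(1) ic(1) ne(4) ib(2) ic(2)] A[OF ia(1) ic(1) ne(2) ia(2) ic(2)] e
      using ne by (auto simp: min_def)
    then show False by simp
  next
    case 4
    then have "ls!id" "\<not> ls!id" using A[OF ic(1) id(1) ne(6) ic(2) id(2)] A[OF ib(1) id(1) ne(5) ib(2) id(2)] e
      using ne by (auto simp: min_def)
    then show False by simp
  qed
qed

lemma conn_chain: assumes g: "is_graph G" and ch: "chain_ok G ys ls" and sys: "set ys = fst G"
  shows "graph_connected G \<longleftrightarrow> ls!0"
proof -
  let ?R = "{(a, b). {a, b} \<in> snd G}"
  have l2: "length ys \<ge> 2" using ch unfolding chain_ok_def by auto
  have d: "distinct ys" using ch unfolding chain_ok_def by auto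
  show ?thesis
  proof
    assume c: "graph_connected G"
    show "ls!0"
    proof (rule ccontr)
      assume n0: "\<not> ls!0"
      have "z = ys!0" if "(ys!0, z) \<in> ?R\<^sup>*" for z
        using that
      proof (induction rule: rtrancl_induct)
        case base then show ?case by simp
      next
        case (step a b)
        then have e: "{ys!0, b} \<in> snd G" by simp
        then have "b \<in> fst G" "card {ys!0, b} = 2" using g unfolding is_graph_def by auto
        then have bne: "b \<noteq> ys!0" and "b \<in> set ys" using sys by (auto split: if_splits)
        then obtain k where "k < length ys" "b = ys!k" by (auto simp: in_set_conv_nth)
        with bne have k: "k < length ys" "b = ys!k" "b \<noteq> ys!0" by auto
        then have "k \<noteq> 0" by (metis (mono_tags))
        then have "{ys!0, ys!k} \<in> snd G \<longleftrightarrow> ls!0" using ch k unfolding chain_ok_def by auto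
        then show ?case using e n0 k by simp
      qed
      note reach = this
      have l01: "0 < length ys" "1 < length ys" using l2 by linarith+
      have "ys!0 \<in> fst G" "ys!1 \<in> fst G" using nth_mem[OF l01(1)] nth_mem[OF l01(2)] sys by auto
      with reach have "ys!1 = ys!0" using c unfolding graph_connected_def by blast
      then show False using nth_eq_iff_index_eq[OF d l01(2) l01(1)] by simp
    qed
  next
    assume l0: "ls!0"
    have to0: "(x, ys!0) \<in> ?R\<^sup>* \<and> (ys!0, x) \<in> ?R\<^sup>*" if xG: "x \<in> fst G" for x
    proof -
      have "x \<in> set ys" using xG sys by simp
      then obtain k where k: "k < length ys" "x = ys!k" by (metis in_set_conv_nth)
      show ?thesis
      proof (cases "k = 0")
        case True then show ?thesis using k by simp
      next
        case False
        then have "{ys!0, ys!k} \<in> snd G" using ch k l0 unfolding chain_ok_def by auto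
        then have "(ys!0, x) \<in> ?R" "(x, ys!0) \<in> ?R" using k by (auto simp: insert_commute)
        then show ?thesis by auto
      qed
    qed
    have "ys \<noteq> []" using l2 by (cases ys) auto
    then have "fst G \<noteq> {}" using sys by auto
    then show "graph_connected G" unfolding graph_connected_def
      using to0 by (meson rtrancl_trans)
  qed
qed


lemma cat_construct:
  fixes G :: "'a graph"
  assumes ch: "chain_ok G ys ls" and sys: "set ys = fst G"
  shows "caterpillar_explainable G \<and> cherry_in_caterpillar G (last ys)"
proof -
  define s where "s = length ys - 1"
  have l2: "length ys \<ge> 2" and d: "distinct ys" and lls0: "length ls + 1 = length ys"
    and alt: "\<And>i. Suc i < length ls \<Longrightarrow> ls!i \<noteq> ls!Suc i"
    and adj: "\<And>i j. i < j \<Longrightarrow> j < length ys \<Longrightarrow> ({ys!i, ys!j} \<in> snd G \<longleftrightarrow> ls!i)"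
    using ch unfolding chain_ok_def by auto
  have s1: "s \<ge> 1" and n: "length ys = s + 1" and lls: "length ls = s" using l2 lls0 s_def by auto
  interpret m: mk s by unfold_locales (rule s1)
  define \<phi> where "\<phi> a = s + (LEAST j. j < length ys \<and> ys!j = a)" for a
  define t where "t w = (if w < s then (if ls!w then L1 else L0) else Odot)" for w :: nat
  have phi: "\<phi> (ys!i) = s + i" if "i < length ys" for i
    unfolding \<phi>_def using least_idx[OF d that] by simp
  have inG: "\<exists>i. i < length ys \<and> x = ys!i" if "x \<in> fst G" for x
    using that sys by (metis in_set_conv_nth)
  have bij: "bij_betw \<phi> (fst G) m.mX"
    unfolding bij_betw_def
  proof
    show "inj_on \<phi> (fst G)"
    proof (rule inj_onI)
      fix x y assume "x \<in> fst G" "y \<in> fst G" "\<phi> x = \<phi> y"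
      then obtain i j where "i < length ys" "x = ys!i" "j < length ys" "y = ys!j" using inG by blast
      then show "x = y" using \<open>\<phi> x = \<phi> y\<close> phi by auto
    qed
    show "\<phi> ` fst G = m.mX"
    proof
      show "\<phi> ` fst G \<subseteq> m.mX"
      proof
        fix z assume "z \<in> \<phi> ` fst G"
        then obtain x where "x \<in> fst G" "z = \<phi> x" by blast
        then obtain i where "i < length ys" "z = \<phi> (ys!i)" using inG by blast
        then show "z \<in> m.mX" using phi n unfolding m.mX_def by auto
      qed
      show "m.mX \<subseteq> \<phi> ` fst G"
      proof
        fix z assume "z \<in> m.mX"
        then have i: "z - s < length ys" "z = s + (z - s)" using n unfolding m.mX_def by auto
        then have "z = \<phi> (ys!(z - s))" using phi by simp
        moreover have "ys!(z-s) \<in> fst G" using nth_mem[OF i(1)] sys by simp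
        ultimately show "z \<in> \<phi> ` fst G" by blast
      qed
    qed
  qed
  have tL1: "t i = L1 \<longleftrightarrow> ls!i" if "i < s" for i using that unfolding t_def by auto
  have expl: "explains_via G m.mV m.mE m.mX t \<phi>"
    unfolding explains_via_def
  proof (intro conjI ballI impI)
    show "bij_betw \<phi> (fst G) m.mX" by (rule bij)
    fix x y assume x: "x \<in> fst G" and y: "y \<in> fst G" and ne: "x \<noteq> y"
    obtain i where i: "i < length ys" "x = ys!i" using inG x by blast
    obtain j where j: "j < length ys" "y = ys!j" using inG y by blast
    have ij: "i \<noteq> j" using i j ne by auto
    show "({x, y} \<in> snd G) = (t (lca m.mV m.mE (\<phi> x) (\<phi> y)) = L1)"
    proof (cases "i < j")
      case True
      have "lca m.mV m.mE (\<phi> x) (\<phi> y) = i" using m.lca_mk[OF True] j n i phi by simp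
      moreover have "i < s" using True j n by simp
      ultimately show ?thesis using adj[OF True j(1)] i j tL1 by simp
    next
      case False
      then have ji: "j < i" using ij by simp
      have "lca m.mV m.mE (\<phi> x) (\<phi> y) = j"
        using m.lca_mk[OF ji] j n i phi lca_sym[of m.mV m.mE "\<phi> x" "\<phi> y"] by simp
      moreover have "j < s" using ji i n by simp
      ultimately show ?thesis using adj[OF ji i(1)] i j tL1 by (simp add: insert_commute)
    qed
  qed
  have ln: "labeled_network m.mV m.mE m.mX t"
    unfolding labeled_network_def using m.net_mk m.X_iff unfolding t_def by auto
  have disc: "discriminating m.mE m.mX t"
    unfolding discriminating_def
  proof (intro ballI impI, clarify)
    fix u w assume e: "(u, w) \<in> m.mE" "u \<notin> m.mX" "w \<notin> m.mX" "t u = t w"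
    have "w \<in> m.mV" using e m.EV_mk by auto
    then have "w < s" using e m.X_iff by auto
    then have "w = Suc u" using e(1) unfolding m.mE_iff by auto
    then show False using alt[of u] \<open>w < s\<close> lls e(4) unfolding t_def by (auto split: if_splits)
  qed
  have dc: "disc_cotree_via G m.mV m.mE m.mX t \<phi>"
    unfolding disc_cotree_via_def using ln m.tree_mk disc expl by blast
  have ce: "caterpillar_explainable G"
    unfolding caterpillar_explainable_def using cograph_chain[OF ch sys] dc m.cat_mk by blast
  have "ys \<noteq> []" using n by (cases ys) auto
  then have lastys: "last ys = ys!s" using n by (simp add: last_conv_nth)
  have "\<phi> (last ys) = s + s" using phi[of s] n lastys by simp
  moreover have "cherry m.mE m.mX (s + s) (s + s - 1)"
    unfolding cherry_def
  proof (intro conjI exI)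
    show "s + s \<in> m.mX" "s + s - 1 \<in> m.mX" unfolding m.mX_def using s1 by auto
    show "s + s \<noteq> s + s - 1" using s1 by auto
    show "(s - 1, s + s) \<in> m.mE" "(s - 1, s + s - 1) \<in> m.mE" unfolding m.mE_iff m.par_def using s1 by auto
  qed
  ultimately have "cherry_in_caterpillar G (last ys)"
    unfolding cherry_in_caterpillar_def using dc m.cat_mk by metis
  with ce show ?thesis by blast
qed




definition RR :: "'a graph \<Rightarrow> bool" where
  "RR G \<longleftrightarrow> (\<exists>ys zs v ls1 ls2 b. distinct (ys @ zs @ [v]) \<and> set (ys @ zs @ [v]) = fst G \<and>
     ys \<noteq> [] \<and> zs \<noteq> [] \<and> length ys + length zs \<ge> 3 \<and>
     chain_ok G (ys @ [v]) ls1 \<and> chain_ok G (zs @ [v]) ls2 \<and> ls1!0 \<noteq> b \<and> ls2!0 \<noteq> b \<and>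
     (\<forall>y\<in>set ys. \<forall>z\<in>set zs. ({y, z} \<in> snd G \<longleftrightarrow> b)))"

lemma is_graph_induced: "is_graph G \<Longrightarrow> S \<subseteq> fst G \<Longrightarrow> is_graph (induced G S)"
  unfolding is_graph_def induced_def by (auto intro: finite_subset)

lemma del_vert_snd: "snd (del_vert G v) = {e \<in> snd G. e \<subseteq> fst G - {v}}"
  unfolding del_vert_def induced_def by simp
lemma del_vert_fst: "fst (del_vert G v) = fst G - {v}"
  unfolding del_vert_def induced_def by simp
lemma del_ind_fst: "fst (del_vert (induced G S) v) = S - {v}"
  unfolding del_vert_def induced_def by simp
lemma del_ind_snd: "snd (del_vert (induced G S) v) = {e \<in> snd G. e \<subseteq> S - {v}}"
  unfolding del_vert_def induced_def by auto

lemma decomp: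
  assumes g: "is_graph G" and U: "fst G = V1 \<union> V2" and I: "V1 \<inter> V2 = {v}"
  shows "(\<forall>y\<in>V1-{v}. \<forall>z\<in>V2-{v}. {y,z} \<notin> snd G) \<Longrightarrow>
           del_vert G v = disj_union (del_vert (induced G V1) v) (del_vert (induced G V2) v)"
    and "(\<forall>y\<in>V1-{v}. \<forall>z\<in>V2-{v}. {y,z} \<in> snd G) \<Longrightarrow>
           del_vert G v = graph_join (del_vert (induced G V1) v) (del_vert (induced G V2) v)"
proof -
  have two: "\<exists>a c. e = {a, c} \<and> a \<noteq> c" if "e \<in> snd G" for e
    using that g unfolding is_graph_def by (auto simp: card_2_iff)
  have ef: "e \<subseteq> fst G" if "e \<in> snd G" for e using that g unfolding is_graph_def by auto
  have fsts: "fst G - {v} = (V1 - {v}) \<union> (V2 - {v})" using U by auto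
  {
    assume no: "\<forall>y\<in>V1-{v}. \<forall>z\<in>V2-{v}. {y,z} \<notin> snd G"
    have "snd (del_vert G v) = snd (disj_union (del_vert (induced G V1) v) (del_vert (induced G V2) v))"
    proof
      show "snd (del_vert G v) \<subseteq> snd (disj_union (del_vert (induced G V1) v) (del_vert (induced G V2) v))"
      proof
        fix e assume "e \<in> snd (del_vert G v)"
        then have e: "e \<in> snd G" "e \<subseteq> fst G - {v}" unfolding del_vert_snd by auto
        obtain a c where ac: "e = {a, c}" using two[OF e(1)] by blast
        have "a \<in> fst G - {v}" "c \<in> fst G - {v}" using e ac by auto
        moreover have "\<not> (a \<in> V1-{v} \<and> c \<in> V2-{v})" using no e(1) ac by auto
        moreover have "\<not> (c \<in> V1-{v} \<and> a \<in> V2-{v})"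
        proof
          assume "c \<in> V1-{v} \<and> a \<in> V2-{v}"
          then have "{c, a} \<notin> snd G" using no by blast
          then show False using e(1) ac by (simp add: insert_commute)
        qed
        ultimately have "e \<subseteq> V1 - {v} \<or> e \<subseteq> V2 - {v}"
          using ac fsts by auto
        then show "e \<in> snd (disj_union (del_vert (induced G V1) v) (del_vert (induced G V2) v))"
          using e by (auto simp: disj_union_def del_vert_def induced_def)
      qed
      show "snd (disj_union (del_vert (induced G V1) v) (del_vert (induced G V2) v)) \<subseteq> snd (del_vert G v)"
        unfolding disj_union_def del_vert_snd using U by (auto simp: induced_def del_vert_def)
    qed
    moreover have "fst (del_vert G v) = fst (disj_union (del_vert (induced G V1) v) (del_vert (induced G V2) v))"
      using U by (auto simp: disj_union_def del_vert_def induced_def)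
    ultimately show "del_vert G v = disj_union (del_vert (induced G V1) v) (del_vert (induced G V2) v)"
      by (simp add: prod_eq_iff)
  }
  {
    assume all: "\<forall>y\<in>V1-{v}. \<forall>z\<in>V2-{v}. {y,z} \<in> snd G"
    have "snd (del_vert G v) = snd (graph_join (del_vert (induced G V1) v) (del_vert (induced G V2) v))"
    proof
      show "snd (del_vert G v) \<subseteq> snd (graph_join (del_vert (induced G V1) v) (del_vert (induced G V2) v))"
      proof
        fix e assume "e \<in> snd (del_vert G v)"
        then have e: "e \<in> snd G" "e \<subseteq> fst G - {v}" unfolding del_vert_snd by auto
        obtain a c where ac: "e = {a, c}" using two[OF e(1)] by blast
        have "a \<in> fst G - {v}" "c \<in> fst G - {v}" using e ac by auto
        then have "e \<subseteq> V1 - {v} \<or> e \<subseteq> V2 - {v} \<or> (a \<in> V1 - {v} \<and> c \<in> V2 - {v}) \<or> (c \<in> V1 - {v} \<and> a \<in> V2 - {v})"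
          using ac fsts by auto
        then show "e \<in> snd (graph_join (del_vert (induced G V1) v) (del_vert (induced G V2) v))"
          using e ac by (auto simp: insert_commute graph_join_def del_vert_def induced_def)
      qed
      show "snd (graph_join (del_vert (induced G V1) v) (del_vert (induced G V2) v)) \<subseteq> snd (del_vert G v)"
        unfolding graph_join_def del_vert_snd using U all by (auto simp: induced_def del_vert_def)
    qed
    moreover have "fst (del_vert G v) = fst (graph_join (del_vert (induced G V1) v) (del_vert (induced G V2) v))"
      using U by (auto simp: graph_join_def del_vert_def induced_def)
    ultimately show "del_vert G v = graph_join (del_vert (induced G V1) v) (del_vert (induced G V2) v)"
      by (simp add: prod_eq_iff)
  }
qed

lemma decomp_rev:
  assumes U: "fst G = V1 \<union> V2" and I: "V1 \<inter> V2 = {v}" and y: "y \<in> V1 - {v}" and z: "z \<in> V2 - {v}"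
  shows "del_vert G v = disj_union (del_vert (induced G V1) v) (del_vert (induced G V2) v) \<Longrightarrow> {y,z} \<notin> snd G"
    and "del_vert G v = graph_join (del_vert (induced G V1) v) (del_vert (induced G V2) v) \<Longrightarrow> {y,z} \<in> snd G"
proof -
  assume d: "del_vert G v = disj_union (del_vert (induced G V1) v) (del_vert (induced G V2) v)"
  show "{y,z} \<notin> snd G"
  proof
    assume "{y,z} \<in> snd G"
    then have "{y,z} \<in> snd (del_vert G v)" unfolding del_vert_snd using y z U by auto
    then have "{y,z} \<subseteq> V1 - {v} \<or> {y,z} \<subseteq> V2 - {v}" unfolding d by (auto simp: disj_union_def del_vert_def induced_def)
    then show False using y z I by auto
  qed
next
  assume d: "del_vert G v = graph_join (del_vert (induced G V1) v) (del_vert (induced G V2) v)"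
  have "{y,z} \<in> snd (del_vert G v)" unfolding d using y z by (auto simp: graph_join_def del_vert_def induced_def)
  then show "{y,z} \<in> snd G" unfolding del_vert_snd by auto
qed


lemma fst_induced[simp]: "fst (induced G S) = S" by (simp add: induced_def)

lemma side_from_cherry:
  assumes g: "is_graph G" and S: "S \<subseteq> fst G" "v \<in> S" and cc: "cherry_in_caterpillar (induced G S) v"
  shows "\<exists>ys ls. chain_ok G (ys @ [v]) ls \<and> chain_ok (induced G S) (ys @ [v]) ls \<and> set (ys @ [v]) = S \<and>
     (graph_connected (induced G S) \<longleftrightarrow> ls!0)"
proof -
  obtain V :: "nat set" and E X t \<phi> y where dc: "disc_cotree_via (induced G S) V E X t \<phi>"
    and cp: "caterpillar V E X" and ch: "cherry E X (\<phi> v) y"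
    using cc unfolding cherry_in_caterpillar_def by blast
  obtain ys1 ls where c1: "chain_ok (induced G S) ys1 ls" and s1: "set ys1 = S" and l1: "last ys1 = v"
    using cat_analysis[OF dc cp ch] S by auto
  have "ys1 \<noteq> []" using c1 unfolding chain_ok_def by auto
  then have e: "ys1 = butlast ys1 @ [v]" using l1 by (metis append_butlast_last_id)
  have c2: "chain_ok G ys1 ls" using chain_induced[OF s1] c1 by simp
  have "graph_connected (induced G S) \<longleftrightarrow> ls!0"
    using conn_chain[OF is_graph_induced[OF g S(1)] c1] s1 by simp
  then show ?thesis using c1 c2 s1 e by metis
qed

lemma polar_RR: assumes g: "is_graph G" and pc: "polar_cat G" shows "RR G"
proof -
  obtain v V1 V2 where p: "polar_cat_at G v V1 V2" using pc unfolding polar_cat_def by blast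
  then have V: "V1 \<subseteq> fst G" "V2 \<subseteq> fst G" "v \<in> fst G" "fst G = V1 \<union> V2" "V1 \<inter> V2 = {v}"
    "card V1 > 1" "card V2 > 1" and c4: "card (fst G) \<ge> 4"
    and cases: "(graph_connected (induced G V1) \<and> graph_connected (induced G V2) \<and>
         del_vert G v = disj_union (del_vert (induced G V1) v) (del_vert (induced G V2) v)) \<or>
      (\<not> graph_connected (induced G V1) \<and> \<not> graph_connected (induced G V2) \<and>
         del_vert G v = graph_join (del_vert (induced G V1) v) (del_vert (induced G V2) v))"
    and cc1: "cherry_in_caterpillar (induced G V1) v" and cc2: "cherry_in_caterpillar (induced G V2) v"
    unfolding polar_cat_at_def pseudo_cograph_def by auto
  have vV: "v \<in> V1" "v \<in> V2" using V by auto
  obtain ys ls1 where A: "chain_ok G (ys @ [v]) ls1" "set (ys @ [v]) = V1" "graph_connected (induced G V1) \<longleftrightarrow> ls1!0"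
    using side_from_cherry[OF g V(1) vV(1) cc1] by blast
  obtain zs ls2 where B: "chain_ok G (zs @ [v]) ls2" "set (zs @ [v]) = V2" "graph_connected (induced G V2) \<longleftrightarrow> ls2!0"
    using side_from_cherry[OF g V(2) vV(2) cc2] by blast
  have dA: "distinct (ys @ [v])" and dB: "distinct (zs @ [v])" using A B unfolding chain_ok_def by auto
  have sy: "set ys = V1 - {v}" using A(2) dA by auto
  have sz: "set zs = V2 - {v}" using B(2) dB by auto
  have dist: "distinct (ys @ zs @ [v])" using dA dB sy sz V(5) by auto
  have st: "set (ys @ zs @ [v]) = fst G" using A(2) B(2) V(4) by auto
  have "card V1 = length ys + 1" using A(2) dA distinct_card by fastforce
  then have yne: "ys \<noteq> []" using V(6) by auto
  have "card V2 = length zs + 1" using B(2) dB distinct_card by fastforce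
  then have zne: "zs \<noteq> []" using V(7) by auto
  have "card (fst G) = length ys + length zs + 1" using st dist distinct_card by fastforce
  then have l3: "length ys + length zs \<ge> 3" using c4 by simp
  from cases show ?thesis
  proof (elim disjE conjE)
    assume c: "graph_connected (induced G V1)" "graph_connected (induced G V2)"
      and d: "del_vert G v = disj_union (del_vert (induced G V1) v) (del_vert (induced G V2) v)"
    have "\<forall>y\<in>set ys. \<forall>z\<in>set zs. ({y, z} \<in> snd G \<longleftrightarrow> False)"
      using decomp_rev(1)[OF V(4,5) _ _ d] sy sz by blast
    then show ?thesis unfolding RR_def using dist st yne zne l3 A B c
      by (intro exI[of _ ys] exI[of _ zs] exI[of _ v] exI[of _ ls1] exI[of _ ls2] exI[of _ False]) auto
  next
    assume c: "\<not> graph_connected (induced G V1)" "\<not> graph_connected (induced G V2)"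
      and d: "del_vert G v = graph_join (del_vert (induced G V1) v) (del_vert (induced G V2) v)"
    have "\<forall>y\<in>set ys. \<forall>z\<in>set zs. ({y, z} \<in> snd G \<longleftrightarrow> True)"
      using decomp_rev(2)[OF V(4,5) _ _ d] sy sz by blast
    then show ?thesis unfolding RR_def using dist st yne zne l3 A B c
      by (intro exI[of _ ys] exI[of _ zs] exI[of _ v] exI[of _ ls1] exI[of _ ls2] exI[of _ True]) auto
  qed
qed

lemma RR_polar: assumes g: "is_graph G" and r: "RR G" shows "polar_cat G"
proof -
  obtain ys zs v ls1 ls2 b where dist: "distinct (ys @ zs @ [v])" and st: "set (ys @ zs @ [v]) = fst G"
    and yne: "ys \<noteq> []" and zne: "zs \<noteq> []" and l3: "length ys + length zs \<ge> 3"
    and c1: "chain_ok G (ys @ [v]) ls1" and c2: "chain_ok G (zs @ [v]) ls2"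
    and b1: "ls1!0 \<noteq> b" and b2: "ls2!0 \<noteq> b"
    and cr: "\<forall>y\<in>set ys. \<forall>z\<in>set zs. ({y, z} \<in> snd G \<longleftrightarrow> b)"
    using r unfolding RR_def by blast
  define V1 where "V1 = set (ys @ [v])"
  define V2 where "V2 = set (zs @ [v])"
  have V: "V1 \<subseteq> fst G" "V2 \<subseteq> fst G" "v \<in> fst G" "fst G = V1 \<union> V2" "V1 \<inter> V2 = {v}"
    using st dist unfolding V1_def V2_def by auto
  have dA: "distinct (ys @ [v])" "distinct (zs @ [v])" using dist by auto
  have sy: "V1 - {v} = set ys" "V2 - {v} = set zs" using dA unfolding V1_def V2_def by auto
  have cd: "card V1 = length ys + 1" "card V2 = length zs + 1" using dA unfolding V1_def V2_def
    by (auto simp: distinct_card)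
  have "card (set (ys @ zs @ [v])) = length (ys @ zs @ [v])" using dist by (rule distinct_card)
  then have cG: "card (fst G) = length ys + length zs + 1" using st by simp
  have i1: "chain_ok (induced G V1) (ys @ [v]) ls1" using chain_induced[of "ys @ [v]" V1 G] c1 V1_def by simp
  have i2: "chain_ok (induced G V2) (zs @ [v]) ls2" using chain_induced[of "zs @ [v]" V2 G] c2 V2_def by simp
  have f1: "set (ys @ [v]) = fst (induced G V1)" "set (zs @ [v]) = fst (induced G V2)" unfolding V1_def V2_def by simp_all
  have conn1: "graph_connected (induced G V1) \<longleftrightarrow> ls1!0" using conn_chain[OF is_graph_induced[OF g V(1)] i1 f1(1)] .
  have conn2: "graph_connected (induced G V2) \<longleftrightarrow> ls2!0" using conn_chain[OF is_graph_induced[OF g V(2)] i2 f1(2)] .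
  have ct1: "caterpillar_explainable (induced G V1) \<and> cherry_in_caterpillar (induced G V1) v"
    using cat_construct[OF i1 f1(1)] by simp
  have ct2: "caterpillar_explainable (induced G V2) \<and> cherry_in_caterpillar (induced G V2) v"
    using cat_construct[OF i2 f1(2)] by simp
  have cog: "cograph (induced G V1)" "cograph (induced G V2)"
    using cograph_chain[OF i1 f1(1)] cograph_chain[OF i2 f1(2)] .
  have cross: "\<forall>y\<in>V1-{v}. \<forall>z\<in>V2-{v}. ({y,z} \<in> snd G \<longleftrightarrow> b)" using cr sy by simp
  have main: "(graph_connected (induced G V1) \<and> graph_connected (induced G V2) \<and>
         del_vert G v = disj_union (del_vert (induced G V1) v) (del_vert (induced G V2) v)) \<or>
      (\<not> graph_connected (induced G V1) \<and> \<not> graph_connected (induced G V2) \<and>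
         del_vert G v = graph_join (del_vert (induced G V1) v) (del_vert (induced G V2) v))"
  proof (cases b)
    case True
    then show ?thesis using decomp(2)[OF g V(4,5)] cross conn1 conn2 b1 b2 by auto
  next
    case False
    then show ?thesis using decomp(1)[OF g V(4,5)] cross conn1 conn2 b1 b2 by auto
  qed
  have "polar_cat_at G v V1 V2"
    unfolding polar_cat_at_def pseudo_cograph_def
    using V cd cG l3 main ct1 ct2 cog yne zne by auto
  then show ?thesis unfolding polar_cat_def by blast
qed




context elem begin

lemma sides: "elementary_sides V E X P Q"
  unfolding elementary_sides_def Let_def
  using lenP lenQ notboth dP dQ root hdQ lastQ hyb_iff[of h] h_C Vdef inter CX card_X bij Edef
  by auto

lemma strong_intro: assumes "length P \<ge> 3" "length Q \<ge> 3" "\<not> (length P = 3 \<and> length Q = 3)"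
  shows "strong V E X"
  unfolding strong_def
proof (intro conjI allI impI)
  show "elementary V E X" unfolding elementary_def using sides by blast
  fix P' Q' assume es: "elementary_sides V E X P' Q'"
  show "\<not> weak_sides P' Q'"
  proof
    assume "weak_sides P' Q'"
    from weak_imp[OF es this] show False
    proof
      assume "(r, h) \<in> E" then show False using rh_edge assms by auto
    next
      assume c4: "card (V - X) = 4"
      have "V - X = C" using Vdef CX by auto
      then have "card (V - X) = length P + length Q - 2" using card_C by simp
      then show False using assms c4 by auto
    qed
  qed
qed

lemma qd_intro: assumes P: "\<And>i. Suc i < length P - 1 \<Longrightarrow> t (P!i) \<noteq> t (P!Suc i)"
  and Q: "\<And>i. Suc i < length Q - 1 \<Longrightarrow> t (Q!i) \<noteq> t (Q!Suc i)"
  shows "quasi_discriminating V E X t"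
  unfolding quasi_discriminating_def
proof (intro ballI impI, clarify)
  fix u w assume e: "(u, w) \<in> E" "u \<notin> X" "w \<notin> X" "\<not> hybrid E w" and eq: "t u = t w"
  have "w \<in> V" using e EV by auto
  then have wh: "w \<noteq> h" using hyb_iff e by auto
  from e(1)[unfolded E_iff] have "t u \<noteq> t w"
  proof (elim disjE exE conjE)
    fix i assume "Suc i < length P" "u = P!i" "w = P!Suc i"
    moreover have "Suc i \<noteq> length P - 1" using calculation wh Plast by auto
    ultimately show ?thesis using P[of i] by auto
  next
    fix i assume "Suc i < length Q" "u = Q!i" "w = Q!Suc i"
    moreover have "Suc i \<noteq> length Q - 1" using calculation wh Qlast by auto
    ultimately show ?thesis using Q[of i] by auto
  next
    assume "u \<in> C - {r}" "w = lf u" then show ?thesis using lf_X e by auto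
  qed
  then show False using eq by simp
qed



end

lemma lab_eq: "(if x then L1 else L0) = (if y then L1 else L0) \<longleftrightarrow> x = y" by auto

lemma RR_net:
  fixes G :: "'a graph"
  assumes r: "RR G"
  shows "\<exists>(V::nat set) E X t. labeled_network V E X t \<and> elementary V E X \<and> strong V E X \<and>
        quasi_discriminating V E X t \<and> explains G V E X t"
proof -
  obtain ys zs v ls1 ls2 b where dist: "distinct (ys @ zs @ [v])" and st: "set (ys @ zs @ [v]) = fst G"
    and yne: "ys \<noteq> []" and zne: "zs \<noteq> []" and l3: "length ys + length zs \<ge> 3"
    and c1: "chain_ok G (ys @ [v]) ls1" and c2: "chain_ok G (zs @ [v]) ls2"
    and b1: "ls1!0 \<noteq> b" and b2: "ls2!0 \<noteq> b"
    and cr: "\<forall>y\<in>set ys. \<forall>z\<in>set zs. ({y, z} \<in> snd G \<longleftrightarrow> b)"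
    using r unfolding RR_def by blast
  define k where "k = length ys"
  define m where "m = length zs"
  define n where "n = k + m + 1"
  have k1: "k \<ge> 1" and m1: "m \<ge> 1" and km: "k + m \<ge> 3" using yne zne l3 k_def m_def by (auto simp: Suc_le_eq)
  have lls1: "length ls1 = k" and lls2: "length ls2 = m" using c1 c2 k_def m_def unfolding chain_ok_def by auto
  have alt1: "\<And>i. Suc i < k \<Longrightarrow> ls1!i \<noteq> ls1!Suc i" using c1 lls1 unfolding chain_ok_def by auto
  have alt2: "\<And>i. Suc i < m \<Longrightarrow> ls2!i \<noteq> ls2!Suc i" using c2 lls2 unfolding chain_ok_def by auto
  have adj1: "\<And>i j. i < j \<Longrightarrow> j < k + 1 \<Longrightarrow> ({(ys@[v])!i, (ys@[v])!j} \<in> snd G \<longleftrightarrow> ls1!i)"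
    using c1 k_def unfolding chain_ok_def by auto
  have adj2: "\<And>i j. i < j \<Longrightarrow> j < m + 1 \<Longrightarrow> ({(zs@[v])!i, (zs@[v])!j} \<in> snd G \<longleftrightarrow> ls2!i)"
    using c2 m_def unfolding chain_ok_def by auto
  define P :: "nat list" where "P = [0..<k+1] @ [n]"
  define Q :: "nat list" where "Q = 0 # [k+1..<n] @ [n]"
  define X :: "nat set" where "X = {n+1..<n+n+1}"
  define lf :: "nat \<Rightarrow> nat" where "lf c = c + n" for c
  define V where "V = set P \<union> set Q \<union> X"
  define E where "E = set (zip P (tl P)) \<union> set (zip Q (tl Q)) \<union> {(c, lf c) | c. c \<in> set P \<union> set Q - {hd P}}"
  have lenP: "length P = k + 2" and lenQ: "length Q = m + 2" unfolding P_def Q_def n_def by auto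
  have Pn: "P!i = i" if "i \<le> k" for i unfolding P_def using that by (auto simp: nth_append)
  have Pl: "P!(k+1) = n" unfolding P_def by (auto simp: nth_append)
  have Q0: "Q!0 = 0" unfolding Q_def by simp
  have Qn: "Q!(Suc j) = k + Suc j" if "j < m" for j unfolding Q_def n_def using that by (auto simp: nth_append)
  have Ql: "Q!(m+1) = n" unfolding Q_def n_def by (auto simp: nth_append)
  have sP: "set P = {0..<k+1} \<union> {n}" unfolding P_def by auto
  have sQ: "set Q = {0} \<union> {k+1..<n} \<union> {n}" unfolding Q_def by auto
  have sC: "set P \<union> set Q = {0..n}" unfolding sP sQ n_def by auto
  have Pne: "P \<noteq> []" using lenP by auto
  have hdP: "hd P = 0" using Pn[of 0] Pne by (simp add: hd_conv_nth)
  interpret e: elem P Q X lf V E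
  proof
    show "2 \<le> length P" "2 \<le> length Q" "\<not> (length P = 2 \<and> length Q = 2)" using lenP lenQ k1 by auto
    show "distinct P" unfolding P_def n_def by auto
    show "distinct Q" unfolding Q_def n_def by auto
    show "hd Q = hd P" unfolding hdP Q_def by simp
    show "last Q = last P" unfolding P_def Q_def by simp
    show "set P \<inter> set Q = {hd P, last P}" unfolding sP sQ hdP using m1 k1 by (auto simp: P_def n_def)
    show "(set P \<union> set Q) \<inter> X = {}" unfolding sC X_def by auto
    show "V = set P \<union> set Q \<union> X" by (rule V_def)
    show "bij_betw lf (set P \<union> set Q - {hd P}) X"
      unfolding sC hdP X_def bij_betw_def
    proof
      show "inj_on lf ({0..n} - {0})" unfolding lf_def by (auto simp: inj_on_def)
      show "lf ` ({0..n} - {0}) = {n + 1..<n + n + 1}"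
      proof
        show "lf ` ({0..n} - {0}) \<subseteq> {n + 1..<n + n + 1}" unfolding lf_def by auto
        show "{n + 1..<n + n + 1} \<subseteq> lf ` ({0..n} - {0})"
        proof
          fix x assume "x \<in> {n + 1..<n + n + 1}"
          then have "x = lf (x - n)" "x - n \<in> {0..n} - {0}" unfolding lf_def by auto
          then show "x \<in> lf ` ({0..n} - {0})" by blast
        qed
      qed
    qed
    show "E = set (zip P (tl P)) \<union> set (zip Q (tl Q)) \<union> {(c, lf c) | c. c \<in> set P \<union> set Q - {hd P}}"
      by (rule E_def)
  qed
  define lab :: "bool \<Rightarrow> label" where "lab x = (if x then L1 else L0)" for x
  have labL1: "lab x = L1 \<longleftrightarrow> x" for x unfolding lab_def by auto
  have labinj: "lab x \<noteq> lab y \<longleftrightarrow> x \<noteq> y" for x y unfolding lab_def by auto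
  define t where "t w = (if n < w then Odot else if w = 0 then lab b else if w \<le> k then lab (ls1!(w-1))
      else if w < n then lab (ls2!(w-k-1)) else L0)" for w
  have t0: "t 0 = lab b" unfolding t_def by simp
  have tP: "t (Suc i) = lab (ls1!i)" if "i < k" for i unfolding t_def n_def using that by auto
  have tQ: "t (k + Suc j) = lab (ls2!j)" if "j < m" for j unfolding t_def n_def using that by auto
  have ln: "labeled_network V E X t"
    unfolding labeled_network_def
  proof (intro conjI ballI)
    show "network V E X" by (rule e.net)
    fix w assume "w \<in> V"
    then have "w \<le> n \<or> w \<in> X" unfolding V_def sC by auto
    then show "(t w = Odot) = (w \<in> X)" unfolding t_def lab_def X_def by auto
  qed
  have el: "elementary V E X" unfolding elementary_def using e.sides by blast
  have sg: "strong V E X" using e.strong_intro lenP lenQ k1 m1 km by auto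
  have qd: "quasi_discriminating V E X t"
  proof (rule e.qd_intro)
    fix i assume "Suc i < length P - 1"
    then have i: "i < k" using lenP by auto
    show "t (P!i) \<noteq> t (P!Suc i)"
    proof (cases i)
      case 0 then show ?thesis using Pn[of 0] Pn[of 1] k1 t0 tP[of 0] b1 labinj by auto
    next
      case (Suc i')
      then show ?thesis using Pn[of i] Pn[of "Suc i"] i tP[of i'] tP[of i] alt1[of i'] labinj by auto
    qed
  next
    fix j assume "Suc j < length Q - 1"
    then have j: "j < m" using lenQ by auto
    show "t (Q!j) \<noteq> t (Q!Suc j)"
    proof (cases j)
      case 0 then show ?thesis using Q0 Qn[of 0] m1 t0 tQ[of 0] b2 labinj by auto
    next
      case (Suc j')
      then show ?thesis using Qn[of j'] Qn[of j] j tQ[of j'] tQ[of j] alt2[of j'] labinj by auto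
    qed
  qed
  define ws where "ws = ys @ zs @ [v]"
  have lws: "length ws = n" using k_def m_def n_def ws_def by simp
  have dws: "distinct ws" and sws: "set ws = fst G" using dist st ws_def by auto
  define \<phi> where "\<phi> a = n + 1 + (LEAST j. j < length ws \<and> ws!j = a)" for a
  have phi: "\<phi> (ws!i) = lf (Suc i)" if "i < n" for i
    unfolding \<phi>_def lf_def using least_idx[OF dws, of i] that lws by simp
  have inG: "\<exists>i. i < n \<and> x = ws!i" if "x \<in> fst G" for x
  proof -
    have "x \<in> set ws" using that sws by simp
    then show ?thesis using lws by (metis in_set_conv_nth)
  qed
  have bij: "bij_betw \<phi> (fst G) X"
    unfolding bij_betw_def
  proof
    show "inj_on \<phi> (fst G)"
    proof (rule inj_onI)
      fix x y assume "x \<in> fst G" "y \<in> fst G" "\<phi> x = \<phi> y"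
      then obtain i j where "i < n" "x = ws!i" "j < n" "y = ws!j" using inG by blast
      then show "x = y" using \<open>\<phi> x = \<phi> y\<close> phi unfolding lf_def by auto
    qed
    show "\<phi> ` fst G = X"
    proof
      show "\<phi> ` fst G \<subseteq> X"
      proof
        fix z assume "z \<in> \<phi> ` fst G"
        then obtain x where "x \<in> fst G" "z = \<phi> x" by blast
        then obtain i where "i < n" "z = \<phi> (ws!i)" using inG by blast
        then show "z \<in> X" using phi unfolding X_def lf_def by auto
      qed
      show "X \<subseteq> \<phi> ` fst G"
      proof
        fix z assume "z \<in> X"
        then have i: "z - n - 1 < n" "z = lf (Suc (z - n - 1))" unfolding X_def lf_def by auto
        then have "z = \<phi> (ws!(z - n - 1))" using phi by simp
        moreover have "ws!(z-n-1) \<in> fst G" using nth_mem[of "z-n-1" ws] i lws sws by simp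
        ultimately show "z \<in> \<phi> ` fst G" by blast
      qed
    qed
  qed
  have wsY: "ws!i = (ys@[v])!i" "ws!i = ys!i" if "i < k" for i unfolding ws_def using that k_def by (auto simp: nth_append)
  have wsV: "ws!(k+m) = v" "(ys@[v])!k = v" "(zs@[v])!m = v" unfolding ws_def using k_def m_def by (auto simp: nth_append)
  have wsZ: "ws!(k+j) = (zs@[v])!j" "ws!(k+j) = zs!j" if "j < m" for j unfolding ws_def using that k_def m_def by (auto simp: nth_append)
  have PC: "P!Suc i \<in> set P \<union> set Q - {hd P}" if "i \<le> k" for i
  proof -
    have "P!Suc i \<in> set P" using lenP that by auto
    moreover have "P!Suc i \<noteq> 0" using that Pn[of "Suc i"] Pl n_def by (cases "i = k") auto
    ultimately show ?thesis using hdP by auto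
  qed
  have QC: "Q!Suc j \<in> set P \<union> set Q - {hd P}" if "j \<le> m" for j
  proof -
    have "Q!Suc j \<in> set Q" using lenQ that by auto
    moreover have "Q!Suc j \<noteq> 0" using that Qn[of j] Ql n_def by (cases "j = m") auto
    ultimately show ?thesis using hdP by auto
  qed
  have LPP: "lca V E (lf (P!Suc i)) (lf (P!Suc j)) = P!Suc i" if "i < j" "j \<le> k" for i j
  proof (rule e.lca_anc)
    show "P!Suc i \<in> set P \<union> set Q - {hd P}" "P!Suc j \<in> set P \<union> set Q - {hd P}" using PC that by auto
    show "P!Suc i \<noteq> P!Suc j" using e.nthP_eq[of "Suc i" "Suc j"] that lenP by auto
    show "e.cA (P!Suc i) (P!Suc j)" unfolding e.cA_def using that lenP
      by (intro disjI1 exI[of _ "Suc i"] exI[of _ "Suc j"]) auto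
  qed
  have LQQ: "lca V E (lf (Q!Suc i)) (lf (Q!Suc j)) = Q!Suc i" if "i < j" "j \<le> m" for i j
  proof (rule e.lca_anc)
    show "Q!Suc i \<in> set P \<union> set Q - {hd P}" "Q!Suc j \<in> set P \<union> set Q - {hd P}" using QC that by auto
    show "Q!Suc i \<noteq> Q!Suc j" using e.nthQ_eq[of "Suc i" "Suc j"] that lenQ by auto
    show "e.cA (Q!Suc i) (Q!Suc j)" unfolding e.cA_def using that lenQ
      by (intro disjI2 exI[of _ "Suc i"] exI[of _ "Suc j"]) auto
  qed
  have LPQ: "lca V E (lf (P!Suc i)) (lf (Q!Suc j)) = 0" if "i < k" "j < m" for i j
    using e.lca_cross[of "Suc i" "Suc j"] that lenP lenQ hdP by auto
  have key: "{ws!i, ws!j} \<in> snd G \<longleftrightarrow> t (lca V E (lf (Suc i)) (lf (Suc j))) = L1" if ij: "i < j" "j < n" for i j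
  proof -
    consider "j < k" | "i < k \<and> j = k + m" | "i < k \<and> k \<le> j \<and> j < k + m" | "k \<le> i \<and> j < k + m"
      | "k \<le> i \<and> i < k + m \<and> j = k + m" using ij n_def by linarith
    then show ?thesis
    proof cases
      case 1
      then have "lca V E (lf (Suc i)) (lf (Suc j)) = Suc i" using LPP[of i j] Pn[of "Suc i"] Pn[of "Suc j"] ij by auto
      then show ?thesis using tP[of i] labL1 adj1[of i j] wsY[of i] wsY[of j] 1 ij by auto
    next
      case 2
      then have "lca V E (lf (Suc i)) (lf (Suc j)) = Suc i" using LPP[of i k] Pn[of "Suc i"] Pl n_def by auto
      then show ?thesis using tP[of i] labL1 adj1[of i k] wsY[of i] wsV 2 by auto
    next
      case 3
      then have "Suc j = Q!Suc (j - k)" using Qn[of "j-k"] by auto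
      then have "lca V E (lf (Suc i)) (lf (Suc j)) = 0" using LPQ[of i "j-k"] Pn[of "Suc i"] 3 by auto
      moreover have "ws!i \<in> set ys" "ws!j \<in> set zs"
      proof -
        have a: "i < length ys" "j - k < length zs" "i < k" "j - k < m" using 3 k_def m_def by auto
        have "ws!i = ys!i" using wsY(2)[OF a(3)] .
        then show "ws!i \<in> set ys" using nth_mem[OF a(1)] by simp
        have "ws!(k + (j-k)) = zs!(j-k)" using wsZ(2)[OF a(4)] .
        then show "ws!j \<in> set zs" using nth_mem[OF a(2)] 3 by simp
      qed
      ultimately show ?thesis using t0 labL1 cr by auto
    next
      case 4
      have a: "i - k < j - k" "j - k \<le> m" "i - k < m" "j - k < m" using 4 ij by auto
      have e1: "Suc i = Q!Suc (i - k)" "Suc j = Q!Suc (j - k)" using Qn[OF a(3)] Qn[OF a(4)] 4 ij by auto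
      have "lca V E (lf (Q!Suc(i-k))) (lf (Q!Suc(j-k))) = Q!Suc(i-k)" by (rule LQQ[OF a(1,2)])
      then have l: "lca V E (lf (Suc i)) (lf (Suc j)) = Suc i" using e1 by simp
      have "t (k + Suc (i - k)) = lab (ls2!(i-k))" by (rule tQ[OF a(3)])
      then have tt: "t (Suc i) = lab (ls2!(i-k))" using 4 by (simp add: Suc_diff_le)
      have w1: "ws!i = (zs@[v])!(i-k)" using wsZ(1)[OF a(3)] 4 by simp
      have w2: "ws!j = (zs@[v])!(j-k)" using wsZ(1)[OF a(4)] 4 ij by simp
      have "j - k < m + 1" using a by simp
      from adj2[OF a(1) this] show ?thesis using l tt w1 w2 labL1 by simp
    next
      case 5
      have a: "i - k < m" using 5 by auto
      have e1: "Suc i = Q!Suc (i - k)" "Suc j = Q!Suc m" using Qn[OF a] Ql n_def 5 by auto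
      have "lca V E (lf (Q!Suc(i-k))) (lf (Q!Suc m)) = Q!Suc(i-k)" using LQQ[of "i-k" m] a by simp
      then have l: "lca V E (lf (Suc i)) (lf (Suc j)) = Suc i" using e1 by simp
      have "t (k + Suc (i - k)) = lab (ls2!(i-k))" by (rule tQ[OF a])
      then have tt: "t (Suc i) = lab (ls2!(i-k))" using 5 by (simp add: Suc_diff_le)
      have w1: "ws!i = (zs@[v])!(i-k)" using wsZ(1)[OF a] 5 by simp
      have w2: "ws!j = (zs@[v])!m" using wsV 5 by simp
      have "m < m + 1" by simp
      from adj2[OF a this] show ?thesis using l tt w1 w2 labL1 by simp
    qed
  qed
  have ex: "explains_via G V E X t \<phi>"
    unfolding explains_via_def
  proof (intro conjI ballI impI)
    show "bij_betw \<phi> (fst G) X" by (rule bij)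
    fix x y assume x: "x \<in> fst G" and y: "y \<in> fst G" and ne: "x \<noteq> y"
    obtain i where i: "i < n" "x = ws!i" using inG x by blast
    obtain j where j: "j < n" "y = ws!j" using inG y by blast
    have "i \<noteq> j" using i j ne by auto
    then consider "i < j" | "j < i" by linarith
    then show "({x, y} \<in> snd G) = (t (lca V E (\<phi> x) (\<phi> y)) = L1)"
    proof cases
      case 1 then show ?thesis using key[OF 1 j(1)] i j phi by simp
    next
      case 2 then show ?thesis using key[OF 2 i(1)] i j phi lca_sym[of V E "\<phi> x" "\<phi> y"] by (simp add: insert_commute)
    qed
  qed
  show ?thesis using ln el sg qd ex unfolding explains_def by blast
qed




context elem begin

lemma t_notOdot: "labeled_network V E X t \<Longrightarrow> c \<in> C \<Longrightarrow> t c \<noteq> Odot"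
  unfolding labeled_network_def using notX Vdef by auto

lemma first_lab: assumes ln: "labeled_network V E X t" and qd: "quasi_discriminating V E X t"
  and l3: "length P \<ge> 3"
  shows "(t (P!1) = L1) \<noteq> (t r = L1)"
proof -
  have e: "(r, P!1) \<in> E" using edgeP[of 0] P0 l3 by simp
  have in1: "P!1 \<in> set P" using l3 by simp
  have "P!1 \<noteq> h" using P_ne_h[of 1] l3 by simp
  then have "\<not> hybrid E (P!1)" using hyb_iff[of "P!1"] in1 Vdef by auto
  then have "t r \<noteq> t (P!1)" using qd e notX[of r] notX[of "P!1"] r_C in1
    unfolding quasi_discriminating_def by auto
  then show ?thesis using lab_bool t_notOdot[OF ln] r_C in1 by (metis UnI1)
qed

lemma side_chain:
  assumes ln: "labeled_network V E X t" and qd: "quasi_discriminating V E X t"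
    and ex: "explains_via G V E X t \<phi>" and l3: "length P \<ge> 3"
  shows "chain_ok G (map (\<lambda>i. inv_into (fst G) \<phi> (lf (P!Suc i))) [0..<length P - 1])
                     (map (\<lambda>i. t (P!Suc i) = L1) [0..<length P - 2])"
proof -
  let ?f = "\<lambda>i. inv_into (fst G) \<phi> (lf (P!Suc i))"
  have bij: "bij_betw \<phi> (fst G) X" using ex unfolding explains_via_def by auto
  have PC: "P!Suc i \<in> C - {r}" if "i < length P - 1" for i
    using P_ne_r[of "Suc i"] that by auto
  have fG: "?f i \<in> fst G" if "i < length P - 1" for i
    using lf_X[OF PC[OF that]] bij by (auto simp: bij_betw_def inv_into_into)
  have phf: "\<phi> (?f i) = lf (P!Suc i)" if "i < length P - 1" for i
    using lf_X[OF PC[OF that]] bij by (auto simp: bij_betw_def f_inv_into_f)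
  have finj: "?f i = ?f j \<Longrightarrow> i = j" if "i < length P - 1" "j < length P - 1" for i j
  proof -
    assume "?f i = ?f j"
    then have "lf (P!Suc i) = lf (P!Suc j)" using phf that by metis
    then have "P!Suc i = P!Suc j" using lf_inj PC that by blast
    then show "i = j" using nthP_eq[of "Suc i" "Suc j"] that by auto
  qed
  show ?thesis unfolding chain_ok_def
  proof (intro conjI allI impI)
    show "distinct (map ?f [0..<length P - 1])" unfolding distinct_conv_nth using finj by auto
    show "2 \<le> length (map ?f [0..<length P - 1])" using l3 by simp
    show "length (map (\<lambda>i. t (P!Suc i) = L1) [0..<length P - 2]) + 1 = length (map ?f [0..<length P - 1])"
      using l3 by simp
  next
    fix i assume "Suc i < length (map (\<lambda>i. t (P!Suc i) = L1) [0..<length P - 2])"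
    then have i: "Suc i < length P - 2" by simp
    have e: "(P!Suc i, P!Suc (Suc i)) \<in> E" using edgeP[of "Suc i"] i by simp
    have in1: "P!Suc i \<in> C" "P!Suc (Suc i) \<in> C" using i by auto
    have "P!Suc (Suc i) \<noteq> h" using P_ne_h[of "Suc (Suc i)"] i by simp
    then have "\<not> hybrid E (P!Suc (Suc i))" using hyb_iff[of "P!Suc (Suc i)"] in1 Vdef by auto
    then have "t (P!Suc i) \<noteq> t (P!Suc (Suc i))" using qd e notX in1
      unfolding quasi_discriminating_def by auto
    then have "(t (P!Suc i) = L1) \<noteq> (t (P!Suc (Suc i)) = L1)"
      using lab_bool t_notOdot[OF ln] in1 by metis
    then show "map (\<lambda>i. t (P!Suc i) = L1) [0..<length P - 2] ! i \<noteq> map (\<lambda>i. t (P!Suc i) = L1) [0..<length P - 2] ! Suc i"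
      using i by simp
  next
    fix i j assume ij: "i < j \<and> j < length (map ?f [0..<length P - 1])"
    then have ij': "i < j" "j < length P - 1" by auto
    have il: "i < length P - 1" using ij' by simp
    have ne: "?f i \<noteq> ?f j"
    proof
      assume "?f i = ?f j"
      then have "i = j" using finj[OF il ij'(2)] by blast
      then show False using ij' by simp
    qed
    have "{?f i, ?f j} \<in> snd G \<longleftrightarrow> t (lca V E (\<phi> (?f i)) (\<phi> (?f j))) = L1"
      using ex fG ij' ne unfolding explains_via_def by auto
    also have "lca V E (\<phi> (?f i)) (\<phi> (?f j)) = P!Suc i"
    proof -
      have "lca V E (lf (P!Suc i)) (lf (P!Suc j)) = P!Suc i"
      proof (rule lca_anc)
        show "P!Suc i \<in> C - {r}" "P!Suc j \<in> C - {r}" using PC ij' by auto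
        show "P!Suc i \<noteq> P!Suc j" using nthP_eq[of "Suc i" "Suc j"] ij' by auto
        show "cA (P!Suc i) (P!Suc j)" unfolding cA_def using ij'
          by (intro disjI1 exI[of _ "Suc i"] exI[of _ "Suc j"]) auto
      qed
      then show ?thesis using phf ij' by simp
    qed
    finally have F: "({?f i, ?f j} \<in> snd G) = (t (P!Suc i) = L1)" .
    have "i < length P - 2" using ij' by linarith
    then show "({map ?f [0..<length P - 1] ! i, map ?f [0..<length P - 1] ! j} \<in> snd G) =
        map (\<lambda>i. t (P!Suc i) = L1) [0..<length P - 2] ! i" using F ij' il by simp
  qed
qed


lemma cs_facts:
  "distinct (map (\<lambda>i. P!Suc i) [0..<length P - 2] @ map (\<lambda>j. Q!Suc j) [0..<length Q - 2] @ [h])"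
  "set (map (\<lambda>i. P!Suc i) [0..<length P - 2] @ map (\<lambda>j. Q!Suc j) [0..<length Q - 2] @ [h]) = C - {r}"
proof -
  have d1: "distinct (map (\<lambda>i. P!Suc i) [0..<length P - 2])"
    unfolding distinct_conv_nth using nthP_eq by auto
  have d2: "distinct (map (\<lambda>j. Q!Suc j) [0..<length Q - 2])"
    unfolding distinct_conv_nth using nthQ_eq by auto
  have dj: "set (map (\<lambda>i. P!Suc i) [0..<length P - 2]) \<inter> set (map (\<lambda>j. Q!Suc j) [0..<length Q - 2]) = {}"
  proof -
    have False if xa: "x \<in> set (map (\<lambda>i. P!Suc i) [0..<length P - 2])" and xb: "x \<in> set (map (\<lambda>j. Q!Suc j) [0..<length Q - 2])" for x
    proof -
      obtain i where i: "i < length P - 2" "x = P!Suc i" using xa by auto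
      obtain j where j: "j < length Q - 2" "x = Q!Suc j" using xb by auto
      have "Suc j < length Q" using j by linarith
      then have "x \<in> set Q" using j by simp
      moreover have "0 < Suc i" "Suc i < length P - 1" using i by linarith+
      ultimately show False using Pint_notQ i(2) by blast
    qed
    then show ?thesis by blast
  qed
  have h1: "h \<notin> set (map (\<lambda>i. P!Suc i) [0..<length P - 2])"
  proof
    assume "h \<in> set (map (\<lambda>i. P!Suc i) [0..<length P - 2])"
    then obtain i where i: "i < length P - 2" "h = P!Suc i" by auto
    have "Suc i < length P - 1" using i by linarith
    then show False using P_ne_h i(2) by metis
  qed
  have h2: "h \<notin> set (map (\<lambda>j. Q!Suc j) [0..<length Q - 2])"
  proof
    assume "h \<in> set (map (\<lambda>j. Q!Suc j) [0..<length Q - 2])"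
    then obtain i where i: "i < length Q - 2" "h = Q!Suc i" by auto
    have "Suc i < length Q - 1" using i by linarith
    then show False using Q_ne_h i(2) by metis
  qed
  show "distinct (map (\<lambda>i. P!Suc i) [0..<length P - 2] @ map (\<lambda>j. Q!Suc j) [0..<length Q - 2] @ [h])"
    using d1 d2 dj h1 h2 by auto
  show "set (map (\<lambda>i. P!Suc i) [0..<length P - 2] @ map (\<lambda>j. Q!Suc j) [0..<length Q - 2] @ [h]) = C - {r}"
  proof
    show "set (map (\<lambda>i. P!Suc i) [0..<length P - 2] @ map (\<lambda>j. Q!Suc j) [0..<length Q - 2] @ [h]) \<subseteq> C - {r}"
    proof
      fix c assume "c \<in> set (map (\<lambda>i. P!Suc i) [0..<length P - 2] @ map (\<lambda>j. Q!Suc j) [0..<length Q - 2] @ [h])"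
      then consider (p) i where "i < length P - 2" "c = P!Suc i" | (q) j where "j < length Q - 2" "c = Q!Suc j" | (hh) "c = h"
        by auto
      then show "c \<in> C - {r}"
      proof cases
        case p
        then have "Suc i < length P" by linarith
        then show ?thesis using P_ne_r[of "Suc i"] p by auto
      next
        case q
        then have "Suc j < length Q" by linarith
        then show ?thesis using Q_ne_r[of "Suc j"] q by auto
      next
        case hh then show ?thesis using h_C rh by auto
      qed
    qed
    show "C - {r} \<subseteq> set (map (\<lambda>i. P!Suc i) [0..<length P - 2] @ map (\<lambda>j. Q!Suc j) [0..<length Q - 2] @ [h])"
    proof
      fix c assume c: "c \<in> C - {r}"
      then have "c = h \<or> (\<exists>i. 0<i \<and> i<length P - 1 \<and> c = P!i) \<or> (\<exists>i. 0<i \<and> i<length Q - 1 \<and> c = Q!i)"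
        using V_cases[of c] Vdef notX by auto
      then show "c \<in> set (map (\<lambda>i. P!Suc i) [0..<length P - 2] @ map (\<lambda>j. Q!Suc j) [0..<length Q - 2] @ [h])"
      proof (elim disjE exE conjE)
        fix i assume i: "0 < i" "i < length P - 1" "c = P!i"
        then have "c = P!Suc (i - 1)" "i - 1 < length P - 2" by auto
        then show ?thesis by auto
      next
        fix i assume i: "0 < i" "i < length Q - 1" "c = Q!i"
        then have "c = Q!Suc (i - 1)" "i - 1 < length Q - 2" by auto
        then show ?thesis by auto
      qed auto
    qed
  qed
qed

end

lemma net_RR:
  fixes G :: "'a graph" and V :: "'b set"
  assumes ln: "labeled_network V E X t" and el: "elementary V E X" and sg: "strong V E X"
    and qd: "quasi_discriminating V E X t" and exs: "explains G V E X t"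
  shows "RR G"
proof -
  obtain P Q where es: "elementary_sides V E X P Q" using el unfolding elementary_def by blast
  obtain lf where
    l: "length P \<ge> 2" "length Q \<ge> 2" "\<not> (length P = 2 \<and> length Q = 2)"
      "distinct P" "distinct Q" "hd P = net_root V E" "hd Q = hd P" "last Q = last P"
      "hybrid E (last P)" "set P \<inter> set Q = {hd P, last P}"
      "(set P \<union> set Q) \<inter> X = {}" "V = set P \<union> set Q \<union> X"
      "bij_betw lf (set P \<union> set Q - {hd P}) X"
      "E = set (zip P (tl P)) \<union> set (zip Q (tl Q)) \<union> {(c, lf c) | c. c \<in> set P \<union> set Q - {hd P}}"
    using es unfolding elementary_sides_def Let_def by blast
  interpret e: elem P Q X lf V E using l by unfold_locales auto
  have nw: "\<not> weak_sides P Q" using sg es unfolding strong_def by blast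
  then have lP: "length P \<ge> 3" and lQ: "length Q \<ge> 3" and nb: "\<not> (length P = 3 \<and> length Q = 3)"
    using l(1,2) unfolding weak_sides_def by auto
  obtain \<phi> where ex: "explains_via G V E X t \<phi>" using exs unfolding explains_def by blast
  have bij: "bij_betw \<phi> (fst G) X" using ex unfolding explains_via_def by auto
  define \<psi> where "\<psi> = inv_into (fst G) \<phi>"
  have bij': "bij_betw \<psi> X (fst G)" unfolding \<psi>_def using bij by (rule bij_betw_inv_into)
  define k where "k = length P - 2"
  define m where "m = length Q - 2"
  define ys where "ys = map (\<lambda>i. \<psi> (lf (P!Suc i))) [0..<k]"
  define zs where "zs = map (\<lambda>i. \<psi> (lf (Q!Suc i))) [0..<m]"
  define v where "v = \<psi> (lf (last P))"
  define ls1 where "ls1 = map (\<lambda>i. t (P!Suc i) = L1) [0..<length P - 2]"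
  define ls2 where "ls2 = map (\<lambda>i. t (Q!Suc i) = L1) [0..<length Q - 2]"
  define b where "b = (t (hd P) = L1)"
  have yv: "ys @ [v] = map (\<lambda>i. \<psi> (lf (P!Suc i))) [0..<length P - 1]"
  proof -
    have "length P - 1 = Suc k" using lP k_def by simp
    moreover have "P!Suc k = last P" using e.Plast calculation by simp
    ultimately show ?thesis unfolding ys_def v_def by simp
  qed
  have zv: "zs @ [v] = map (\<lambda>i. \<psi> (lf (Q!Suc i))) [0..<length Q - 1]"
  proof -
    have "length Q - 1 = Suc m" using lQ m_def by simp
    moreover have "Q!Suc m = last P" using e.Qlast calculation by simp
    ultimately show ?thesis unfolding zs_def v_def by simp
  qed
  have c1: "chain_ok G (ys @ [v]) ls1" unfolding yv ls1_def \<psi>_def by (rule e.side_chain[OF ln qd ex lP])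
  have c2: "chain_ok G (zs @ [v]) ls2" unfolding zv ls2_def \<psi>_def by (rule elem.side_chain[OF e.swap ln qd ex lQ])
  have b1: "ls1!0 \<noteq> b" using e.first_lab[OF ln qd lP] lP unfolding ls1_def b_def by simp
  have b2: "ls2!0 \<noteq> b" using elem.first_lab[OF e.swap ln qd lQ] lQ l(7) unfolding ls2_def b_def by simp
  define cs where "cs = map (\<lambda>i. P!Suc i) [0..<length P - 2] @ map (\<lambda>j. Q!Suc j) [0..<length Q - 2] @ [last P]"
  have ws: "ys @ zs @ [v] = map (\<psi> \<circ> lf) cs" unfolding cs_def ys_def zs_def v_def k_def m_def by simp
  have inj: "inj_on (\<psi> \<circ> lf) (set cs)"
  proof -
    have scs: "set cs = set P \<union> set Q - {hd P}" unfolding cs_def by (rule e.cs_facts(2))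
    show ?thesis unfolding scs
      using l(13) bij' by (intro comp_inj_on) (auto simp: bij_betw_def)
  qed
  have dcs: "distinct cs" unfolding cs_def by (rule e.cs_facts(1))
  have dist: "distinct (ys @ zs @ [v])" unfolding ws distinct_map using dcs inj by blast
  have st: "set (ys @ zs @ [v]) = fst G"
  proof -
    have scs: "set cs = set P \<union> set Q - {hd P}" unfolding cs_def by (rule e.cs_facts(2))
    have "set (ys @ zs @ [v]) = (\<psi> \<circ> lf) ` set cs" unfolding ws by (rule set_map)
    also have "\<dots> = \<psi> ` lf ` (set P \<union> set Q - {hd P})" unfolding scs by (rule image_comp[symmetric])
    finally have "set (ys @ zs @ [v]) = \<psi> ` lf ` (set P \<union> set Q - {hd P})" .
    also have "\<dots> = fst G" using l(13) bij' by (simp add: bij_betw_def)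
    finally show ?thesis .
  qed
  have yne: "ys \<noteq> []" and zne: "zs \<noteq> []" and l3: "length ys + length zs \<ge> 3"
    unfolding ys_def zs_def k_def m_def using lP lQ nb by auto
  have cr: "\<forall>y\<in>set ys. \<forall>z\<in>set zs. ({y, z} \<in> snd G \<longleftrightarrow> b)"
  proof (intro ballI)
    fix y z assume y: "y \<in> set ys" and z: "z \<in> set zs"
    obtain i where i: "i < k" "y = \<psi> (lf (P!Suc i))" using y unfolding ys_def by auto
    obtain j where j: "j < m" "z = \<psi> (lf (Q!Suc j))" using z unfolding zs_def by auto
    have yz: "y \<noteq> z" using dist y z by auto
    have PC: "P!Suc i \<in> set P \<union> set Q - {hd P}" using e.P_ne_r[of "Suc i"] i k_def by auto
    have QC: "Q!Suc j \<in> set P \<union> set Q - {hd P}" using e.Q_ne_r[of "Suc j"] j m_def by auto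
    have phy: "\<phi> y = lf (P!Suc i)" using i(2) e.lf_X[OF PC] bij unfolding \<psi>_def by (auto simp: bij_betw_def f_inv_into_f)
    have phz: "\<phi> z = lf (Q!Suc j)" using j(2) e.lf_X[OF QC] bij unfolding \<psi>_def by (auto simp: bij_betw_def f_inv_into_f)
    have yG: "y \<in> fst G" "z \<in> fst G" using y z st by auto
    have "{y, z} \<in> snd G \<longleftrightarrow> t (lca V E (\<phi> y) (\<phi> z)) = L1" using ex yG yz unfolding explains_via_def by auto
    also have "lca V E (\<phi> y) (\<phi> z) = hd P" unfolding phy phz
      using e.lca_cross[of "Suc i" "Suc j"] i j k_def m_def by auto
    finally show "{y, z} \<in> snd G \<longleftrightarrow> b" unfolding b_def .
  qed
  show ?thesis unfolding RR_def using dist st yne zne l3 c1 c2 b1 b2 cr by blast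
qed


theorem mainTheorem8:
  fixes G :: "'a graph"
  assumes "is_graph G"
  shows "polar_cat G \<longleftrightarrow>
    (\<exists>(V::nat set) E X t. labeled_network V E X t \<and> elementary V E X \<and> strong V E X \<and>
        quasi_discriminating V E X t \<and> explains G V E X t)"
proof
  assume "polar_cat G"
  then have "RR G" using polar_RR[OF assms] by blast
  then show "\<exists>(V::nat set) E X t. labeled_network V E X t \<and> elementary V E X \<and> strong V E X \<and>
        quasi_discriminating V E X t \<and> explains G V E X t" by (rule RR_net)
next
  assume "\<exists>(V::nat set) E X t. labeled_network V E X t \<and> elementary V E X \<and> strong V E X \<and>
        quasi_discriminating V E X t \<and> explains G V E X t"
  then obtain V :: "nat set" and E X t where "labeled_network V E X t" "elementary V E X" "strong V E X"
        "quasi_discriminating V E X t" "explains G V E X t" by blast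
  then have "RR G" by (rule net_RR)
  then show "polar_cat G" by (rule RR_polar[OF assms])
qed

end
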